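(* For every interval forecast $I\subseteq(0,1)$ with rational endpoints, there is a lower semicomputable test supermartingale $T$ for $I$ such that $\limsup_{n\to\infty}T(\omega_{1:n})=\infty$ for every path $\omega\in\Omega$ that is not wML-random for $I$.
   Context: $\mathcal X=\{0,1\}$, $\Omega=\mathcal X^{\mathbb N}$ (paths), $\mathbb S=\bigcup_{n\ge0}\mathcal X^n$ (finite binary strings), $\square$ the empty string, $\omega_{1:n}=(\omega_1,\dots,\omega_n)$. Interval forecasts are nonempty closed intervals $I\subseteq[0,1]$; $\overline E_I(f)=\max_{p\in I}[pf(1)+(1-p)f(0)]$. A test supermartingale for $I$ is $T:\mathbb S\to\mathbb R_{\ge0}$ with $T(\square)=1$ and $\overline E_I(T(s\,\cdot)-T(s))\le0$ for all $s$; lower semicomputable if there is a recursive $r:\mathbb S\times\mathbb N_0\to\mathbb Q$ non-decreasing in $n$ with $T(s)=\lim_nr(s,n)$. A multiplier process $D$ maps $\mathbb S$ to gambles $\mathcal X\to\mathbb R$, is lower semicomputable if $(s,x)\mapsto D(s)(x)$ is a limit of a recursive non-decreasing rational approximation, and generates $D^{\circledcirc}(x_1,\dots,x_n)=\prod_{k=0}^{n-1}D(x_{1:k})(x_{k+1})$. A path $\omega$ is wML-random for $I$ if no test supermartingale for $I$ of the form $D^{\circledcirc}$ with $D$ a lower semicomputable multiplier process satisfies $\limsup_nD^{\circledcirc}(\omega_{1:n})=\infty$. *)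

theory Defs
  imports Complex_Main "HOL-Library.Nat_Bijection" "HOL-Library.Liminf_Limsup"
    "HOL-Library.Extended_Real"
begin

datatype recf =
    Zf
  | Sf
  | Idf nat
  | Cnf recf "recf list"
  | Prf recf recf
  | Mnf recf

inductive reval :: "recf \<Rightarrow> nat list \<Rightarrow> nat \<Rightarrow> bool" where
  reval_Z: "reval Zf xs 0"
| reval_S: "reval Sf (x # xs) (Suc x)"
| reval_Id: "i < length xs \<Longrightarrow> reval (Idf i) xs (xs ! i)"
| reval_Cn: "list_all2 (\<lambda>g y. reval g xs y) gs ys \<Longrightarrow> reval f ys z \<Longrightarrow> reval (Cnf f gs) xs z"
| reval_Pr0: "reval f xs z \<Longrightarrow> reval (Prf f g) (0 # xs) z"
| reval_PrS: "reval (Prf f g) (n # xs) y \<Longrightarrow> reval g (n # y # xs) z \<Longrightarrow>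
              reval (Prf f g) (Suc n # xs) z"
| reval_Mn: "reval f (n # xs) 0 \<Longrightarrow> (\<forall>m<n. \<exists>y. reval f (m # xs) (Suc y)) \<Longrightarrow>
              reval (Mnf f) xs n"

text \<open>Finite binary strings are bool lists (False = 0, True = 1).\<close>

fun enc_str :: "bool list \<Rightarrow> nat" where
  "enc_str [] = 0"
| "enc_str (b # s) = 2 * enc_str s + (if b then 2 else 1)"

definition enc_int :: "int \<Rightarrow> nat" where
  "enc_int z = (if z \<ge> 0 then 2 * nat z else 2 * nat (- z) - 1)"

definition enc_rat :: "rat \<Rightarrow> nat" where
  "enc_rat q = (case quotient_of q of (p, d) \<Rightarrow> prod_encode (enc_int p, nat d))"

definition enc_bit :: "bool \<Rightarrow> nat" where
  "enc_bit x = (if x then 1 else 0)"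

definition recursive_SN_Q :: "(bool list \<Rightarrow> nat \<Rightarrow> rat) \<Rightarrow> bool" where
  "recursive_SN_Q r \<longleftrightarrow> (\<exists>f. \<forall>s n. reval f [enc_str s, n] (enc_rat (r s n)))"

definition recursive_SXN_Q :: "(bool list \<Rightarrow> bool \<Rightarrow> nat \<Rightarrow> rat) \<Rightarrow> bool" where
  "recursive_SXN_Q r \<longleftrightarrow>
     (\<exists>f. \<forall>s x n. reval f [enc_str s, enc_bit x, n] (enc_rat (r s x n)))"

definition upper_exp :: "real set \<Rightarrow> (bool \<Rightarrow> real) \<Rightarrow> real" where
  "upper_exp I f = (SUP p\<in>I. p * f True + (1 - p) * f False)"

definition test_supermartingale :: "real set \<Rightarrow> (bool list \<Rightarrow> real) \<Rightarrow> bool" where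
  "test_supermartingale I T \<longleftrightarrow>
     T [] = 1 \<and> (\<forall>s. T s \<ge> 0) \<and> (\<forall>s. upper_exp I (\<lambda>x. T (s @ [x]) - T s) \<le> 0)"

definition lower_semicomputable :: "(bool list \<Rightarrow> real) \<Rightarrow> bool" where
  "lower_semicomputable T \<longleftrightarrow>
     (\<exists>r. recursive_SN_Q r \<and> (\<forall>s. mono (r s)) \<and>
          (\<forall>s. (\<lambda>n. real_of_rat (r s n)) \<longlonglongrightarrow> T s))"

definition lower_semicomputable_mult :: "(bool list \<Rightarrow> bool \<Rightarrow> real) \<Rightarrow> bool" where
  "lower_semicomputable_mult D \<longleftrightarrow>
     (\<exists>r. recursive_SXN_Q r \<and> (\<forall>s x. mono (r s x)) \<and>
          (\<forall>s x. (\<lambda>n. real_of_rat (r s x n)) \<longlonglongrightarrow> D s x))"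

definition mult_gen :: "(bool list \<Rightarrow> bool \<Rightarrow> real) \<Rightarrow> bool list \<Rightarrow> real" where
  "mult_gen D xs = (\<Prod>k<length xs. D (take k xs) (xs ! k))"

text \<open>Prefix \<open>\<omega>_{1:n}\<close> of a path (paths are indexed from 0).\<close>
definition prefix :: "(nat \<Rightarrow> bool) \<Rightarrow> nat \<Rightarrow> bool list" where
  "prefix \<omega> n = map \<omega> [0..<n]"

definition wML_random :: "real set \<Rightarrow> (nat \<Rightarrow> bool) \<Rightarrow> bool" where
  "wML_random I \<omega> \<longleftrightarrow>
     \<not> (\<exists>D. lower_semicomputable_mult D \<and> test_supermartingale I (mult_gen D) \<and>
            limsup (\<lambda>n. ereal (mult_gen D (prefix \<omega> n))) = \<infinity>)"

end

theory Submission
  imports Defs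
begin

definition rf :: "nat \<Rightarrow> (nat list \<Rightarrow> nat) \<Rightarrow> bool" where
  "rf k F \<longleftrightarrow> (\<exists>f. \<forall>xs. length xs = k \<longrightarrow> reval f xs (F xs))"

lemma rf_cong: "rf k F \<Longrightarrow> (\<And>xs. length xs = k \<Longrightarrow> F xs = G xs) \<Longrightarrow> rf k G"
  unfolding rf_def by metis

fun cprog :: "nat \<Rightarrow> recf" where
  "cprog 0 = Zf"
| "cprog (Suc c) = Cnf Sf [cprog c]"

lemma reval_cprog: "reval (cprog c) xs c"
proof (induction c)
  case 0 then show ?case by (simp add: reval_Z)
next
  case (Suc c)
  have "list_all2 (\<lambda>g y. reval g xs y) [cprog c] [c]" using Suc by simp
  moreover have "reval Sf [c] (Suc c)" using reval_S[of c "[]"] by simp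
  ultimately show ?case using reval_Cn[of xs "[cprog c]" "[c]" Sf "Suc c"] by simp
qed

lemma rf_const[intro]: "rf k (\<lambda>_. c)"
  unfolding rf_def using reval_cprog by blast

lemma rf_nth[intro]: "j < k \<Longrightarrow> rf k (\<lambda>xs. xs ! j)"
  unfolding rf_def using reval_Id by (metis)

lemma rf_nth_drop[intro]: "n + j < k \<Longrightarrow> rf k (\<lambda>xs. drop n xs ! j)"
  by (rule rf_cong[OF rf_nth[of "n+j" k]]) auto

lemma progs_exist:
  assumes "\<forall>G\<in>set Gs. rf k G"
  shows "\<exists>gs. list_all2 (\<lambda>g G. \<forall>xs. length xs = k \<longrightarrow> reval g xs (G xs)) gs Gs"
  using assms
proof (induction Gs)
  case Nil then show ?case by auto
next
  case (Cons G Gs)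
  then obtain gs where "list_all2 (\<lambda>g G. \<forall>xs. length xs = k \<longrightarrow> reval g xs (G xs)) gs Gs" by auto
  moreover obtain g where "\<forall>xs. length xs = k \<longrightarrow> reval g xs (G xs)" using Cons.prems unfolding rf_def by auto
  ultimately show ?case by (intro exI[of _ "g # gs"]) auto
qed

lemma rf_comp:
  assumes "rf m F" "length Gs = m" "\<forall>G\<in>set Gs. rf k G"
  shows "rf k (\<lambda>xs. F (map (\<lambda>G. G xs) Gs))"
proof -
  obtain f where f: "\<forall>xs. length xs = m \<longrightarrow> reval f xs (F xs)" using assms(1) unfolding rf_def by auto
  obtain gs where gs: "list_all2 (\<lambda>g G. \<forall>xs. length xs = k \<longrightarrow> reval g xs (G xs)) gs Gs"
    using progs_exist[OF assms(3)] by auto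
  have "reval (Cnf f gs) xs (F (map (\<lambda>G. G xs) Gs))" if "length xs = k" for xs
  proof (rule reval_Cn)
    show "list_all2 (\<lambda>g y. reval g xs y) gs (map (\<lambda>G. G xs) Gs)"
      using gs that by (auto simp: list_all2_conv_all_nth)
    show "reval f (map (\<lambda>G. G xs) Gs) (F (map (\<lambda>G. G xs) Gs))" using f assms(2) by simp
  qed
  then show ?thesis unfolding rf_def by blast
qed

lemma rf_Suc0: "rf 1 (\<lambda>xs. Suc (xs ! 0))"
  unfolding rf_def
proof (intro exI allI impI)
  fix xs :: "nat list" assume "length xs = 1"
  then obtain x where "xs = [x]" by (cases xs) auto
  then show "reval Sf xs (Suc (xs ! 0))" using reval_S[of x "[]"] by simp
qed

lemma rf_prim0:
  assumes "rf k B" "rf (Suc (Suc k)) G"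
  shows "rf (Suc k) (\<lambda>xs. rec_nat (B (tl xs)) (\<lambda>i acc. G (i # acc # tl xs)) (hd xs))"
proof -
  obtain b where b: "\<forall>xs. length xs = k \<longrightarrow> reval b xs (B xs)" using assms(1) unfolding rf_def by auto
  obtain g where g: "\<forall>xs. length xs = Suc (Suc k) \<longrightarrow> reval g xs (G xs)" using assms(2) unfolding rf_def by auto
  have *: "reval (Prf b g) (n # xs) (rec_nat (B xs) (\<lambda>i acc. G (i # acc # xs)) n)" if "length xs = k" for n xs
  proof (induction n)
    case 0 then show ?case using b that by (simp add: reval_Pr0)
  next
    case (Suc n) then show ?case using g that by (auto intro: reval_PrS)
  qed
  show ?thesis unfolding rf_def
  proof (intro exI allI impI)
    fix xs :: "nat list" assume "length xs = Suc k"
    then obtain n ys where "xs = n # ys" "length ys = k" by (cases xs) auto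
    then show "reval (Prf b g) xs (rec_nat (B (tl xs)) (\<lambda>i acc. G (i # acc # tl xs)) (hd xs))"
      using * by simp
  qed
qed

lemma rf_comp1: "rf 1 F \<Longrightarrow> rf k A \<Longrightarrow> rf k (\<lambda>xs. F [A xs])"
  using rf_comp[of 1 F "[A]" k] by simp

lemma rf_Suc[intro]: "rf k A \<Longrightarrow> rf k (\<lambda>xs. Suc (A xs))"
  using rf_comp1[OF rf_Suc0, of k A] by simp

lemma rf_prim[intro]:
  assumes "rf k N" "rf k B" "rf (Suc (Suc k)) (\<lambda>ys. G (ys ! 0) (ys ! 1) (drop 2 ys))"
  shows "rf k (\<lambda>xs. rec_nat (B xs) (\<lambda>i acc. G i acc xs) (N xs))"
proof -
  define G' where "G' = (\<lambda>ys. G (ys ! 0) (ys ! 1) (drop 2 ys))"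
  have h: "rf (Suc k) (\<lambda>xs. rec_nat (B (tl xs)) (\<lambda>i acc. G' (i # acc # tl xs)) (hd xs))"
    by (rule rf_prim0[OF assms(2)]) (use assms(3) in \<open>simp add: G'_def\<close>)
  have "rf k (\<lambda>xs. (\<lambda>xs. rec_nat (B (tl xs)) (\<lambda>i acc. G' (i # acc # tl xs)) (hd xs)) (map (\<lambda>G. G xs) (N # map (\<lambda>j xs. xs ! j) [0..<k])))"
    by (rule rf_comp[OF h]) (auto simp: assms(1))
  then show ?thesis
  proof (rule rf_cong)
    fix xs :: "nat list" assume "length xs = k"
    then have "map (\<lambda>j. xs ! j) [0..<k] = xs" using map_nth[of xs] by simp
    then show "(\<lambda>xs. rec_nat (B (tl xs)) (\<lambda>i acc. G' (i # acc # tl xs)) (hd xs)) (map (\<lambda>G. G xs) (N # map (\<lambda>j xs. xs ! j) [0..<k])) = rec_nat (B xs) (\<lambda>i acc. G i acc xs) (N xs)"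
      by (simp add: comp_def G'_def)
  qed
qed

named_theorems rfI
declare rf_const[rfI] rf_nth[rfI] rf_nth_drop[rfI] rf_Suc[rfI] rf_prim[rfI]

lemma rf_nth_drop2[rfI]: "n + m + j < k \<Longrightarrow> rf k (\<lambda>xs. drop n (drop m xs) ! j)"
  by (rule rf_cong[OF rf_nth[of "n+m+j" k]]) (auto simp: add.commute add.left_commute)

lemma rf_nth_drop3[rfI]: "n + m + l + j < k \<Longrightarrow> rf k (\<lambda>xs. drop n (drop m (drop l xs)) ! j)"
  by (rule rf_cong[OF rf_nth[of "n+m+l+j" k]]) (auto simp: add.commute add.left_commute)

lemma rf_shift:
  assumes "rf (Suc k) F"
  shows "rf (Suc (Suc k)) (\<lambda>zs. F (zs ! 0 # drop 2 zs))"
proof -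
  have "rf (Suc (Suc k)) (\<lambda>zs. F (map (\<lambda>G. G zs) ((\<lambda>zs. zs ! 0) # map (\<lambda>j zs. zs ! (j + 2)) [0..<k])))"
    by (rule rf_comp[OF assms]) (auto intro: rf_nth)
  then show ?thesis
  proof (rule rf_cong)
    fix zs :: "nat list" assume "length zs = Suc (Suc k)"
    then have "map (\<lambda>j. zs ! (j + 2)) [0..<k] = drop 2 zs"
      by (intro nth_equalityI) auto
    then show "F (map (\<lambda>G. G zs) ((\<lambda>zs. zs ! 0) # map (\<lambda>j zs. zs ! (j + 2)) [0..<k])) = F (zs ! 0 # drop 2 zs)"
      by (simp add: comp_def)
  qed
qed

lemma rf_shift':
  assumes "rf (Suc k) (\<lambda>ys. F (ys ! 0) (drop 1 ys))"
  shows "rf (Suc (Suc k)) (\<lambda>zs. F (zs ! 0) (drop 2 zs))"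
  using rf_shift[OF assms] by simp

lemma rf_dropn:
  assumes "rf k A"
  shows "rf (m + k) (\<lambda>ys. A (drop m ys))"
proof -
  have "rf (m + k) (\<lambda>zs. A (map (\<lambda>G. G zs) (map (\<lambda>j zs. zs ! (j + m)) [0..<k])))"
    by (rule rf_comp[OF assms]) (auto intro: rf_nth)
  then show ?thesis
  proof (rule rf_cong)
    fix zs :: "nat list" assume "length zs = m + k"
    then have "map (\<lambda>j. zs ! (j + m)) [0..<k] = drop m zs"
      by (intro nth_equalityI) (auto simp: add.commute)
    then show "A (map (\<lambda>G. G zs) (map (\<lambda>j zs. zs ! (j + m)) [0..<k])) = A (drop m zs)"
      by (simp add: comp_def)
  qed
qed

lemma rf_drop1: "rf k A \<Longrightarrow> rf (Suc k) (\<lambda>ys. A (drop 1 ys))"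
  using rf_dropn[of k A 1] by simp
lemma rf_drop2: "rf k A \<Longrightarrow> rf (Suc (Suc k)) (\<lambda>ys. A (drop 2 ys))"
  using rf_dropn[of k A 2] by simp

lemma rf_add[rfI]: "rf k A \<Longrightarrow> rf k B \<Longrightarrow> rf k (\<lambda>xs. A xs + B xs)"
proof -
  assume a: "rf k A" "rf k B"
  have "rf k (\<lambda>xs. rec_nat (A xs) (\<lambda>i acc. Suc acc) (B xs))"
    by (rule rf_prim; intro rfI a) simp_all
  moreover have "rec_nat a (\<lambda>i acc. Suc acc) b = a + b" for a b :: nat by (induction b) auto
  ultimately show ?thesis by simp
qed

lemma rf_mult[rfI]: "rf k A \<Longrightarrow> rf k B \<Longrightarrow> rf k (\<lambda>xs. A xs * B xs)"
proof -
  assume a: "rf k A" "rf k B"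
  have "rf k (\<lambda>xs. rec_nat 0 (\<lambda>i acc. acc + A xs) (B xs))"
    by (rule rf_prim; intro rfI a rf_drop2[OF a(1)]) simp_all
  moreover have "rec_nat 0 (\<lambda>i acc. acc + a) b = a * b" for a b :: nat by (induction b) auto
  ultimately show ?thesis by (simp add: mult.commute)
qed

lemma rf_pred: "rf k A \<Longrightarrow> rf k (\<lambda>xs. A xs - 1)"
proof -
  assume a: "rf k A"
  have "rf k (\<lambda>xs. rec_nat 0 (\<lambda>i acc. i) (A xs))"
    by (rule rf_prim; intro rfI a) simp_all
  moreover have "rec_nat 0 (\<lambda>i acc. i) b = b - 1" for b :: nat by (induction b) auto
  ultimately show ?thesis by simp
qed

lemma rf_sub[rfI]: "rf k A \<Longrightarrow> rf k B \<Longrightarrow> rf k (\<lambda>xs. A xs - B xs)"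
proof -
  assume a: "rf k A" "rf k B"
  have "rf k (\<lambda>xs. rec_nat (A xs) (\<lambda>i acc. acc - 1) (B xs))"
    by (rule rf_prim; intro rfI a rf_pred) simp_all
  moreover have "rec_nat a (\<lambda>i acc. acc - 1) b = a - b" for a b :: nat by (induction b) auto
  ultimately show ?thesis by simp
qed

definition rp :: "nat \<Rightarrow> (nat list \<Rightarrow> bool) \<Rightarrow> bool" where
  "rp k P \<longleftrightarrow> rf k (\<lambda>xs. if P xs then 1 else 0)"

lemma rf_if[rfI]: "rp k P \<Longrightarrow> rf k A \<Longrightarrow> rf k B \<Longrightarrow> rf k (\<lambda>xs. if P xs then A xs else B xs)"
proof -
  assume a: "rp k P" "rf k A" "rf k B"
  have "rf k (\<lambda>xs. A xs * (if P xs then 1 else 0) + B xs * (1 - (if P xs then 1 else 0)))"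
    using a unfolding rp_def by (intro rfI a) (auto simp: rp_def)
  then show ?thesis by (rule rf_cong) auto
qed

lemma rp_const[rfI]: "rp k (\<lambda>_. c)"
  unfolding rp_def by (rule rf_const)

lemma rp_le[rfI]: "rf k A \<Longrightarrow> rf k B \<Longrightarrow> rp k (\<lambda>xs. A xs \<le> B xs)"
  unfolding rp_def
proof -
  assume a: "rf k A" "rf k B"
  have "rf k (\<lambda>xs. 1 - (A xs - B xs))" using a by (intro rfI)
  then show "rf k (\<lambda>xs. if A xs \<le> B xs then 1 else 0)" by (rule rf_cong) auto
qed

lemma rp_less[rfI]: "rf k A \<Longrightarrow> rf k B \<Longrightarrow> rp k (\<lambda>xs. A xs < B xs)"
  unfolding rp_def
proof -
  assume a: "rf k A" "rf k B"
  have "rf k (\<lambda>xs. 1 - (Suc (A xs) - B xs))" using a by (intro rfI)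
  then show "rf k (\<lambda>xs. if A xs < B xs then 1 else 0)" by (rule rf_cong) auto
qed

lemma rp_eq[rfI]: "rf k A \<Longrightarrow> rf k B \<Longrightarrow> rp k (\<lambda>xs. A xs = B xs)"
  unfolding rp_def
proof -
  assume a: "rf k A" "rf k B"
  have "rf k (\<lambda>xs. 1 - ((A xs - B xs) + (B xs - A xs)))" using a by (intro rfI)
  then show "rf k (\<lambda>xs. if A xs = B xs then 1 else 0)" by (rule rf_cong) auto
qed

lemma rp_not[rfI]: "rp k P \<Longrightarrow> rp k (\<lambda>xs. \<not> P xs)"
proof -
  assume a: "rp k P"
  have "rf k (\<lambda>xs. 1 - (if P xs then 1 else 0))" by (intro rfI a)
  then show ?thesis unfolding rp_def by (rule rf_cong) auto
qed

lemma rp_and[rfI]: "rp k P \<Longrightarrow> rp k Q \<Longrightarrow> rp k (\<lambda>xs. P xs \<and> Q xs)"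
proof -
  assume a: "rp k P" "rp k Q"
  have "rf k (\<lambda>xs. (if P xs then 1 else 0) * (if Q xs then 1 else 0))" by (intro rfI a)
  then show ?thesis unfolding rp_def by (rule rf_cong) auto
qed

lemma rp_or[rfI]: "rp k P \<Longrightarrow> rp k Q \<Longrightarrow> rp k (\<lambda>xs. P xs \<or> Q xs)"
proof -
  assume a: "rp k P" "rp k Q"
  have "rp k (\<lambda>xs. \<not> (\<not> P xs \<and> \<not> Q xs))" using a by (intro rfI)
  then show ?thesis by simp
qed

lemma rp_imp[rfI]: "rp k P \<Longrightarrow> rp k Q \<Longrightarrow> rp k (\<lambda>xs. P xs \<longrightarrow> Q xs)"
proof -
  assume a: "rp k P" "rp k Q"
  have "rp k (\<lambda>xs. \<not> P xs \<or> Q xs)" using a by (intro rfI)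
  then show ?thesis by simp
qed

lemma rf_sum[rfI]:
  assumes "rf k N" "rf (Suc k) (\<lambda>ys. F (ys ! 0) (drop 1 ys))"
  shows "rf k (\<lambda>xs. \<Sum>i<N xs. F i xs)"
proof -
  have "rf k (\<lambda>xs. rec_nat 0 (\<lambda>i acc. acc + F i xs) (N xs))"
    by (rule rf_prim; intro rfI assms rf_shift'[OF assms(2)]) simp_all
  moreover have "rec_nat 0 (\<lambda>i acc. acc + F i xs) n = (\<Sum>i<n. F i xs)" for n xs
    by (induction n) auto
  ultimately show ?thesis by simp
qed

lemma rf_prod[rfI]:
  assumes "rf k N" "rf (Suc k) (\<lambda>ys. F (ys ! 0) (drop 1 ys))"
  shows "rf k (\<lambda>xs. \<Prod>i<N xs. F i xs)"
proof -
  have "rf k (\<lambda>xs. rec_nat 1 (\<lambda>i acc. acc * F i xs) (N xs))"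
    by (rule rf_prim; intro rfI assms rf_shift'[OF assms(2)]) simp_all
  moreover have "rec_nat 1 (\<lambda>i acc. acc * F i xs) n = (\<Prod>i<n. F i xs)" for n xs
    by (induction n) auto
  ultimately show ?thesis by simp
qed

lemma rp_ex[rfI]:
  assumes "rf k N" "rp (Suc k) (\<lambda>ys. P (ys ! 0) (drop 1 ys))"
  shows "rp k (\<lambda>xs. \<exists>i<N xs. P i xs)"
proof -
  have "rp k (\<lambda>xs. 0 < (\<Sum>i<N xs. if P i xs then 1 else (0::nat)))"
    by (intro rfI assms)
  moreover have "(0 < (\<Sum>i<n. if P i xs then 1 else (0::nat))) = (\<exists>i<n. P i xs)" for n xs
    by (induction n) (auto simp: less_Suc_eq)
  ultimately show ?thesis by simp
qed

lemma rp_all[rfI]: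
  assumes "rf k N" "rp (Suc k) (\<lambda>ys. P (ys ! 0) (drop 1 ys))"
  shows "rp k (\<lambda>xs. \<forall>i<N xs. P i xs)"
proof -
  have "rp k (\<lambda>xs. \<not> (\<exists>i<N xs. \<not> P i xs))"
    by (intro rfI assms)
  then show ?thesis by simp
qed

definition bmin :: "nat \<Rightarrow> (nat \<Rightarrow> bool) \<Rightarrow> nat" where
  "bmin N P = (if \<exists>i<N. P i then LEAST i. P i else N)"

lemma bmin_sum: "bmin N P = (\<Sum>j<N. if \<exists>i<Suc j. P i then 0 else 1)"
proof (induction N)
  case 0 then show ?case by (simp add: bmin_def)
next
  case (Suc N)
  show ?case
  proof (cases "\<exists>i<N. P i")
    case True
    then show ?thesis using Suc by (auto simp: bmin_def less_Suc_eq)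
  next
    case False
    have "(\<Sum>j<N. if \<exists>i<Suc j. P i then 0 else 1) = (\<Sum>j<N. (1::nat))"
      by (rule sum.cong) (use False in \<open>auto simp: less_Suc_eq_le\<close>)
    then have s: "(\<Sum>j<N. if \<exists>i<Suc j. P i then 0 else 1) = N" by simp
    show ?thesis
    proof (cases "P N")
      case True
      then have "(LEAST i. P i) = N" using False by (intro Least_equality) (auto simp: not_less)
      then show ?thesis using True False s by (auto simp: bmin_def less_Suc_eq)
    next
      case f2: False
      then show ?thesis using False s by (auto simp: bmin_def less_Suc_eq)
    qed
  qed
qed

lemma rf_bmin[rfI]:
  assumes "rf k N" "rp (Suc k) (\<lambda>ys. P (ys ! 0) (drop 1 ys))"
  shows "rf k (\<lambda>xs. bmin (N xs) (\<lambda>i. P i xs))"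
proof -
  have "rf k (\<lambda>xs. \<Sum>j<N xs. if \<exists>i<Suc j. P i xs then 0 else 1)"
  proof -
    have sh: "rp (Suc (Suc k)) (\<lambda>zs. P (zs ! 0) (drop 1 (drop 1 zs)))"
      using rf_shift'[OF assms(2)[unfolded rp_def]] unfolding rp_def by (simp add: numeral_2_eq_2)
    show ?thesis by (intro rfI assms sh) simp_all
  qed
  then show ?thesis by (simp add: bmin_sum)
qed

lemma bmin_le: "bmin N P \<le> N"
  by (auto simp: bmin_def intro: order.trans[OF Least_le] less_imp_le)

lemma bmin_prop: "\<exists>i<N. P i \<Longrightarrow> P (bmin N P) \<and> bmin N P < N"
  by (auto simp: bmin_def intro: LeastI order.strict_trans1[OF Least_le])

lemma bmin_least: "i < N \<Longrightarrow> P i \<Longrightarrow> bmin N P \<le> i"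
  by (auto simp: bmin_def intro: Least_le)

lemma bmin_eq: "\<lbrakk>i < N; P i; \<And>j. j < i \<Longrightarrow> \<not> P j\<rbrakk> \<Longrightarrow> bmin N P = i"
  by (auto simp: bmin_def intro!: Least_equality) (meson not_less)

lemma div_bmin: "0 < d \<Longrightarrow> a div d = bmin (Suc a) (\<lambda>q. a < Suc q * d)"
proof (rule sym, rule bmin_eq)
  assume d: "0 < d"
  show "a div d < Suc a" by (simp add: le_imp_less_Suc)
  show "a < Suc (a div d) * d"
    using d by (metis add.commute div_mult_mod_eq mod_less_divisor mult.commute mult_Suc_right nat_add_left_cancel_less)
  show "\<not> a < Suc j * d" if "j < a div d" for j
  proof -
    have "Suc j * d \<le> (a div d) * d" using that by (intro mult_right_mono) auto
    also have "\<dots> \<le> a" by (metis div_mult_mod_eq le_add1)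
    finally show ?thesis by simp
  qed
qed

lemma rf_div[rfI]: "rf k A \<Longrightarrow> rf k B \<Longrightarrow> rf k (\<lambda>xs. A xs div B xs)"
proof -
  assume a: "rf k A" "rf k B"
  have "rf k (\<lambda>xs. if B xs = 0 then 0 else bmin (Suc (A xs)) (\<lambda>q. A xs < Suc q * B xs))"
    by (intro rfI a rf_drop1[OF a(1)] rf_drop1[OF a(2)]) simp_all
  then show ?thesis by (rule rf_cong) (auto simp: div_bmin)
qed

lemma rf_mod[rfI]: "rf k A \<Longrightarrow> rf k B \<Longrightarrow> rf k (\<lambda>xs. A xs mod B xs)"
proof -
  assume a: "rf k A" "rf k B"
  have "rf k (\<lambda>xs. A xs - B xs * (A xs div B xs))" by (intro rfI a)
  then show ?thesis by (rule rf_cong) (simp add: minus_mult_div_eq_mod)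
qed

lemma rf_power[rfI]: "rf k A \<Longrightarrow> rf k B \<Longrightarrow> rf k (\<lambda>xs. A xs ^ B xs)"
proof -
  assume a: "rf k A" "rf k B"
  have "rf k (\<lambda>xs. rec_nat 1 (\<lambda>i acc. acc * A xs) (B xs))"
    by (rule rf_prim; intro rfI a rf_drop2[OF a(1)]) simp_all
  moreover have "rec_nat 1 (\<lambda>i acc. acc * a) b = a ^ b" for a b :: nat by (induction b) auto
  ultimately show ?thesis by simp
qed

lemma rp_dvd[rfI]: "rf k A \<Longrightarrow> rf k B \<Longrightarrow> rp k (\<lambda>xs. A xs dvd B xs)"
proof -
  assume a: "rf k A" "rf k B"
  have "rp k (\<lambda>xs. B xs mod A xs = 0)" by (intro rfI a)
  then show ?thesis by (simp add: dvd_eq_mod_eq_0)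
qed

lemma rp_even[rfI]: "rf k A \<Longrightarrow> rp k (\<lambda>xs. even (A xs))"
proof -
  assume a: "rf k A"
  have "rp k (\<lambda>xs. 2 dvd A xs)" by (intro rfI a)
  then show ?thesis by simp
qed

lemma rp_odd[rfI]: "rf k A \<Longrightarrow> rp k (\<lambda>xs. odd (A xs))"
  by (intro rfI)

definition pe :: "nat \<Rightarrow> nat \<Rightarrow> nat" where "pe a b = prod_encode (a, b)"
definition pd1 :: "nat \<Rightarrow> nat" where "pd1 c = fst (prod_decode c)"
definition pd2 :: "nat \<Rightarrow> nat" where "pd2 c = snd (prod_decode c)"

lemma pd_pe[simp]: "pd1 (pe a b) = a" "pd2 (pe a b) = b"
  by (simp_all add: pd1_def pd2_def pe_def)

lemma pe_pd[simp]: "pe (pd1 c) (pd2 c) = c"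
  by (simp add: pd1_def pd2_def pe_def)

lemma pe_inj[simp]: "pe a b = pe c d \<longleftrightarrow> a = c \<and> b = d"
  by (simp add: pe_def)

lemma rf_pe[rfI]: "rf k A \<Longrightarrow> rf k B \<Longrightarrow> rf k (\<lambda>xs. pe (A xs) (B xs))"
proof -
  assume a: "rf k A" "rf k B"
  have "rf k (\<lambda>xs. (A xs + B xs) * Suc (A xs + B xs) div 2 + A xs)" by (intro rfI a)
  then show ?thesis by (rule rf_cong) (simp add: pe_def prod_encode_def triangle_def)
qed

lemma pd1_bmin: "pd1 c = bmin (Suc c) (\<lambda>a. \<exists>b<Suc c. pe a b = c)"
proof (rule sym, rule bmin_eq)
  have c: "pe (pd1 c) (pd2 c) = c" by simp
  show "pd1 c < Suc c" using le_prod_encode_1[of "pd1 c" "pd2 c"] c by (simp add: pe_def)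
  show "\<exists>b<Suc c. pe (pd1 c) b = c"
    using le_prod_encode_2[of "pd2 c" "pd1 c"] c by (intro exI[of _ "pd2 c"]) (simp add: pe_def)
  show "\<not> (\<exists>b<Suc c. pe j b = c)" if "j < pd1 c" for j
    using that by (metis less_irrefl pd_pe(1))
qed

lemma pd2_bmin: "pd2 c = bmin (Suc c) (\<lambda>b. \<exists>a<Suc c. pe a b = c)"
proof (rule sym, rule bmin_eq)
  have c: "pe (pd1 c) (pd2 c) = c" by simp
  show "pd2 c < Suc c" using le_prod_encode_2[of "pd2 c" "pd1 c"] c by (simp add: pe_def)
  show "\<exists>a<Suc c. pe a (pd2 c) = c"
    using le_prod_encode_1[of "pd1 c" "pd2 c"] c by (intro exI[of _ "pd1 c"]) (simp add: pe_def)
  show "\<not> (\<exists>a<Suc c. pe a j = c)" if "j < pd2 c" for j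
    using that by (metis less_irrefl pd_pe(2))
qed

lemma rf_pd1[rfI]: "rf k A \<Longrightarrow> rf k (\<lambda>xs. pd1 (A xs))"
proof -
  assume a: "rf k A"
  have "rf k (\<lambda>xs. bmin (Suc (A xs)) (\<lambda>a. \<exists>b<Suc (A xs). pe a b = A xs))"
    by (intro rfI a rf_drop1[OF a] rf_drop1[OF rf_drop1[OF a]]) simp_all
  then show ?thesis by (simp add: pd1_bmin[symmetric])
qed

lemma rf_pd2[rfI]: "rf k A \<Longrightarrow> rf k (\<lambda>xs. pd2 (A xs))"
proof -
  assume a: "rf k A"
  have "rf k (\<lambda>xs. bmin (Suc (A xs)) (\<lambda>b. \<exists>a<Suc (A xs). pe a b = A xs))"
    by (intro rfI a rf_drop1[OF a] rf_drop1[OF rf_drop1[OF a]]) simp_all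
  then show ?thesis by (simp add: pd2_bmin[symmetric])
qed

definition lhd :: "nat \<Rightarrow> nat" where "lhd c = pd1 (c - 1)"
definition ltl :: "nat \<Rightarrow> nat" where "ltl c = pd2 (c - 1)"
definition lcons :: "nat \<Rightarrow> nat \<Rightarrow> nat" where "lcons x c = Suc (pe x c)"
primrec litl :: "nat \<Rightarrow> nat \<Rightarrow> nat" where
  "litl c 0 = c" | "litl c (Suc i) = ltl (litl c i)"
definition lnth :: "nat \<Rightarrow> nat \<Rightarrow> nat" where "lnth c i = lhd (litl c i)"
definition llen :: "nat \<Rightarrow> nat" where "llen c = (\<Sum>i<c. if litl c i = 0 then 0 else 1)"

lemma rf_lhd[rfI]: "rf k A \<Longrightarrow> rf k (\<lambda>xs. lhd (A xs))"
  unfolding lhd_def by (intro rfI)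
lemma rf_ltl[rfI]: "rf k A \<Longrightarrow> rf k (\<lambda>xs. ltl (A xs))"
  unfolding ltl_def by (intro rfI)
lemma rf_lcons[rfI]: "rf k A \<Longrightarrow> rf k B \<Longrightarrow> rf k (\<lambda>xs. lcons (A xs) (B xs))"
  unfolding lcons_def by (intro rfI)
lemma rf_litl[rfI]: "rf k A \<Longrightarrow> rf k B \<Longrightarrow> rf k (\<lambda>xs. litl (A xs) (B xs))"
proof -
  assume a: "rf k A" "rf k B"
  have "rf k (\<lambda>xs. rec_nat (A xs) (\<lambda>i acc. ltl acc) (B xs))"
    by (rule rf_prim; intro rfI a) simp_all
  moreover have "rec_nat c (\<lambda>i acc. ltl acc) n = litl c n" for c n by (induction n) auto
  ultimately show ?thesis by simp
qed
lemma rf_lnth[rfI]: "rf k A \<Longrightarrow> rf k B \<Longrightarrow> rf k (\<lambda>xs. lnth (A xs) (B xs))"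
  unfolding lnth_def by (intro rfI)
lemma rf_llen[rfI]: "rf k A \<Longrightarrow> rf k (\<lambda>xs. llen (A xs))"
proof -
  assume a: "rf k A"
  show ?thesis unfolding llen_def by (intro rfI a rf_drop1[OF a]) simp_all
qed

lemma list_decode_nz: "c \<noteq> 0 \<Longrightarrow> list_decode c = lhd c # list_decode (ltl c)"
  by (cases c) (auto simp: lhd_def ltl_def pd1_def pd2_def split: prod.splits)

lemma list_decode_eq0: "list_decode c = [] \<longleftrightarrow> c = 0"
  by (metis list_decode.simps(1) list_decode_eq)

lemma litl_Suc: "litl c (Suc i) = ltl (litl c i)"
  by simp

lemma pd_0[simp]: "pd1 0 = 0" "pd2 0 = 0"
  using pd_pe[of 0 0] by (simp_all add: pe_def prod_encode_def)

lemma ltl_0[simp]: "ltl 0 = 0" by (simp add: ltl_def)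

lemma ltl_dec: "list_decode (ltl c) = tl (list_decode c)"
  by (cases "c = 0") (simp_all add: list_decode_nz)

lemma litl_drop: "list_decode (litl c i) = drop i (list_decode c)"
  by (induction i) (simp_all add: ltl_dec drop_Suc tl_drop[symmetric])

lemma lnth_correct: "i < length (list_decode c) \<Longrightarrow> lnth c i = list_decode c ! i"
proof -
  assume i: "i < length (list_decode c)"
  have "drop i (list_decode c) \<noteq> []" using i by simp
  then have "litl c i \<noteq> 0" using litl_drop[of c i] by (metis list_decode.simps(1))
  then have "list_decode (litl c i) = lhd (litl c i) # list_decode (ltl (litl c i))" by (rule list_decode_nz)
  then have "hd (drop i (list_decode c)) = lnth c i" using litl_drop[of c i] by (simp add: lnth_def)
  then show ?thesis using i by (simp add: hd_drop_conv_nth)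
qed

lemma length_le_encode: "length xs \<le> list_encode xs"
proof (induction xs)
  case Nil then show ?case by simp
next
  case (Cons x xs)
  then show ?case using le_prod_encode_2[of "list_encode xs" x] by simp
qed

lemma llen_correct: "llen c = length (list_decode c)"
proof -
  have L: "length (list_decode c) \<le> c" using length_le_encode[of "list_decode c"] by simp
  have "(litl c i = 0) = (\<not> i < length (list_decode c))" for i
    using litl_drop[of c i] list_decode_eq0[of "litl c i"] by (metis drop_eq_Nil not_le)
  then have "(if litl c i = 0 then 0 else 1) = (if i < length (list_decode c) then 1 else (0::nat))" for i
    by simp
  then have "llen c = (\<Sum>i<c. if i < length (list_decode c) then 1 else (0::nat))"
    unfolding llen_def by simp
  also have "\<dots> = card {i. i < c \<and> i < length (list_decode c)}"
    by (simp add: sum.If_cases Int_def)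
  also have "{i. i < c \<and> i < length (list_decode c)} = {..<length (list_decode c)}" using L by auto
  finally show ?thesis by simp
qed

lemma lcons_correct: "lcons x (list_encode xs) = list_encode (x # xs)"
  by (simp add: lcons_def pe_def)

lemma llen_enc[simp]: "llen (list_encode xs) = length xs"
  by (simp add: llen_correct)
lemma lnth_enc[simp]: "i < length xs \<Longrightarrow> lnth (list_encode xs) i = xs ! i"
  by (simp add: lnth_correct)
lemma ltl_enc[simp]: "ltl (list_encode (x # xs)) = list_encode xs"
  by (simp add: ltl_def pd2_def)
lemma lcons_dec: "list_decode (lcons x c) = x # list_decode c"
  by (metis lcons_correct list_decode_inverse list_encode_inverse)

lemma rf_lift1: "rf 1 (\<lambda>xs. F (xs ! 0)) \<Longrightarrow> rf k A \<Longrightarrow> rf k (\<lambda>xs. F (A xs))"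
  using rf_comp[of 1 "\<lambda>xs. F (xs ! 0)" "[A]" k] by simp
lemma rf_lift2: "rf 2 (\<lambda>xs. F (xs ! 0) (xs ! 1)) \<Longrightarrow> rf k A \<Longrightarrow> rf k B \<Longrightarrow> rf k (\<lambda>xs. F (A xs) (B xs))"
  using rf_comp[of 2 "\<lambda>xs. F (xs ! 0) (xs ! 1)" "[A, B]" k] by simp
lemma rf_lift3: "rf 3 (\<lambda>xs. F (xs ! 0) (xs ! 1) (xs ! 2)) \<Longrightarrow> rf k A \<Longrightarrow> rf k B \<Longrightarrow> rf k C \<Longrightarrow>
  rf k (\<lambda>xs. F (A xs) (B xs) (C xs))"
  using rf_comp[of 3 "\<lambda>xs. F (xs ! 0) (xs ! 1) (xs ! 2)" "[A, B, C]" k] by (simp add: numeral_3_eq_3)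
lemma rp_lift1: "rp 1 (\<lambda>xs. P (xs ! 0)) \<Longrightarrow> rf k A \<Longrightarrow> rp k (\<lambda>xs. P (A xs))"
  unfolding rp_def by (rule rf_lift1[where F="\<lambda>a. if P a then 1 else 0"])
lemma rp_lift2: "rp 2 (\<lambda>xs. P (xs ! 0) (xs ! 1)) \<Longrightarrow> rf k A \<Longrightarrow> rf k B \<Longrightarrow> rp k (\<lambda>xs. P (A xs) (B xs))"
  unfolding rp_def by (rule rf_lift2[where F="\<lambda>a b. if P a b then 1 else 0"])
lemma rp_lift3: "rp 3 (\<lambda>xs. P (xs ! 0) (xs ! 1) (xs ! 2)) \<Longrightarrow> rf k A \<Longrightarrow> rf k B \<Longrightarrow> rf k C \<Longrightarrow>
  rp k (\<lambda>xs. P (A xs) (B xs) (C xs))"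
  unfolding rp_def by (rule rf_lift3[where F="\<lambda>a b c. if P a b c then 1 else 0"])

section \<open>Codes of programs and derivations\<close>

fun rcode :: "recf \<Rightarrow> nat" where
  "rcode Zf = pe 0 0"
| "rcode Sf = pe 1 0"
| "rcode (Idf i) = pe 2 i"
| "rcode (Cnf f gs) = pe 3 (pe (rcode f) (list_encode (map rcode gs)))"
| "rcode (Prf f g) = pe 4 (pe (rcode f) (rcode g))"
| "rcode (Mnf f) = pe 5 (rcode f)"

definition ec :: "nat \<Rightarrow> nat" where "ec e = pd1 e"
definition ex :: "nat \<Rightarrow> nat" where "ex e = pd1 (pd2 e)"
definition ey :: "nat \<Rightarrow> nat" where "ey e = pd1 (pd2 (pd2 e))"
definition ea :: "nat \<Rightarrow> nat" where "ea e = pd2 (pd2 (pd2 e))"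
definition mkent :: "nat \<Rightarrow> nat \<Rightarrow> nat \<Rightarrow> nat \<Rightarrow> nat" where "mkent c x y a = pe c (pe x (pe y a))"

lemma ent_sel[simp]: "ec (mkent c x y a) = c" "ex (mkent c x y a) = x" "ey (mkent c x y a) = y" "ea (mkent c x y a) = a"
  by (simp_all add: ec_def ex_def ey_def ea_def mkent_def)

lemma rf_ec[rfI]: "rf k A \<Longrightarrow> rf k (\<lambda>xs. ec (A xs))" unfolding ec_def by (intro rfI)
lemma rf_ex[rfI]: "rf k A \<Longrightarrow> rf k (\<lambda>xs. ex (A xs))" unfolding ex_def by (intro rfI)
lemma rf_ey[rfI]: "rf k A \<Longrightarrow> rf k (\<lambda>xs. ey (A xs))" unfolding ey_def by (intro rfI)
lemma rf_ea[rfI]: "rf k A \<Longrightarrow> rf k (\<lambda>xs. ea (A xs))" unfolding ea_def by (intro rfI)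

definition Jg :: "nat \<Rightarrow> (nat \<Rightarrow> nat \<Rightarrow> nat \<Rightarrow> bool) \<Rightarrow> (nat \<Rightarrow> nat \<Rightarrow> bool) \<Rightarrow> bool" where
  "Jg e R Q \<longleftrightarrow>
    (pd1 (ec e) = 0 \<and> ey e = 0) \<or>
    (pd1 (ec e) = 1 \<and> 0 < llen (ex e) \<and> ey e = Suc (lnth (ex e) 0)) \<or>
    (pd1 (ec e) = 2 \<and> pd2 (ec e) < llen (ex e) \<and> ey e = lnth (ex e) (pd2 (ec e))) \<or>
    (pd1 (ec e) = 3 \<and> llen (ea e) = llen (pd2 (pd2 (ec e))) \<and>
       (\<forall>l<llen (pd2 (pd2 (ec e))). R (lnth (pd2 (pd2 (ec e))) l) (ex e) (lnth (ea e) l)) \<and>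
       R (pd1 (pd2 (ec e))) (ea e) (ey e)) \<or>
    (pd1 (ec e) = 4 \<and> 0 < llen (ex e) \<and>
       ((lnth (ex e) 0 = 0 \<and> R (pd1 (pd2 (ec e))) (ltl (ex e)) (ey e)) \<or>
        (0 < lnth (ex e) 0 \<and> R (ec e) (lcons (lnth (ex e) 0 - 1) (ltl (ex e))) (ea e) \<and>
           R (pd2 (pd2 (ec e))) (lcons (lnth (ex e) 0 - 1) (lcons (ea e) (ltl (ex e)))) (ey e)))) \<or>
    (pd1 (ec e) = 5 \<and> R (pd2 (ec e)) (lcons (ey e) (ex e)) 0 \<and>
       (\<forall>m<ey e. Q (pd2 (ec e)) (lcons m (ex e))))"

lemma Jg_mono:
  assumes "Jg e R Q" "\<And>c x y. R c x y \<Longrightarrow> R' c x y" "\<And>c x. Q c x \<Longrightarrow> Q' c x"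
  shows "Jg e R' Q'"
  using assms unfolding Jg_def by blast

definition Mt :: "nat \<Rightarrow> nat \<Rightarrow> nat \<Rightarrow> nat \<Rightarrow> nat \<Rightarrow> bool" where
  "Mt t i c x y \<longleftrightarrow> (\<exists>i'<i. ec (lnth t i') = c \<and> ex (lnth t i') = x \<and> ey (lnth t i') = y)"
definition Qt :: "nat \<Rightarrow> nat \<Rightarrow> nat \<Rightarrow> nat \<Rightarrow> bool" where
  "Qt t i c x \<longleftrightarrow> (\<exists>i'<i. ec (lnth t i') = c \<and> ex (lnth t i') = x \<and> 0 < ey (lnth t i'))"

definition valid :: "nat \<Rightarrow> bool" where
  "valid t \<longleftrightarrow> (\<forall>i<llen t. Jg (lnth t i) (Mt t i) (Qt t i))"

lemma rp_valid0: "rp 1 (\<lambda>xs. valid (xs ! 0))"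
  unfolding valid_def Jg_def Mt_def Qt_def
  by (intro rfI) simp_all

lemma rp_valid[rfI]: "rf k A \<Longrightarrow> rp k (\<lambda>xs. valid (A xs))"
  by (rule rp_lift1[OF rp_valid0])

definition RL :: "nat list \<Rightarrow> nat \<Rightarrow> nat \<Rightarrow> nat \<Rightarrow> bool" where
  "RL es c x y \<longleftrightarrow> (\<exists>e\<in>set es. ec e = c \<and> ex e = x \<and> ey e = y)"
definition QL :: "nat list \<Rightarrow> nat \<Rightarrow> nat \<Rightarrow> bool" where
  "QL es c x \<longleftrightarrow> (\<exists>e\<in>set es. ec e = c \<and> ex e = x \<and> 0 < ey e)"

definition validL :: "nat list \<Rightarrow> bool" where
  "validL es \<longleftrightarrow> (\<forall>i<length es. Jg (es ! i) (RL (take i es)) (QL (take i es)))"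

lemma ex_take_conv: "i \<le> length es \<Longrightarrow> (\<exists>i'<i. P (lnth (list_encode es) i')) \<longleftrightarrow> (\<exists>e\<in>set (take i es). P e)"
proof
  assume i: "i \<le> length es"
  { assume "\<exists>i'<i. P (lnth (list_encode es) i')"
    then obtain i' where "i' < i" "P (lnth (list_encode es) i')" by blast
    then show "\<exists>e\<in>set (take i es). P e" using i
      by (intro bexI[of _ "es ! i'"]) (auto simp: in_set_conv_nth intro!: exI[of _ i'])
  }
  { assume "\<exists>e\<in>set (take i es). P e"
    then obtain e where "e \<in> set (take i es)" "P e" by blast
    then obtain j where "j < length (take i es)" "take i es ! j = e" by (auto simp: in_set_conv_nth)
    then show "\<exists>i'<i. P (lnth (list_encode es) i')" using i \<open>P e\<close>
      by (intro exI[of _ j]) auto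
  }
qed

lemma valid_validL: "valid (list_encode es) \<longleftrightarrow> validL es"
proof -
  have "Mt (list_encode es) i = RL (take i es)" "Qt (list_encode es) i = QL (take i es)" if i: "i < length es" for i
  proof -
    have "Mt (list_encode es) i c x y = RL (take i es) c x y" for c x y
      using ex_take_conv[of i es "\<lambda>e. ec e = c \<and> ex e = x \<and> ey e = y"] i unfolding Mt_def RL_def by simp
    then show "Mt (list_encode es) i = RL (take i es)" by (intro ext)
    have "Qt (list_encode es) i c x = QL (take i es) c x" for c x
      using ex_take_conv[of i es "\<lambda>e. ec e = c \<and> ex e = x \<and> 0 < ey e"] i unfolding Qt_def QL_def by simp
    then show "Qt (list_encode es) i = QL (take i es)" by (intro ext)
  qed
  then show ?thesis unfolding valid_def validL_def by auto
qed

lemma RL_mono: "set es \<subseteq> set es' \<Longrightarrow> RL es c x y \<Longrightarrow> RL es' c x y"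
  unfolding RL_def by blast
lemma QL_mono: "set es \<subseteq> set es' \<Longrightarrow> QL es c x \<Longrightarrow> QL es' c x"
  unfolding QL_def by blast

lemma validL_append: "validL es1 \<Longrightarrow> validL es2 \<Longrightarrow> validL (es1 @ es2)"
  unfolding validL_def
proof (intro allI impI)
  fix i assume v1: "\<forall>i<length es1. Jg (es1 ! i) (RL (take i es1)) (QL (take i es1))"
    and v2: "\<forall>i<length es2. Jg (es2 ! i) (RL (take i es2)) (QL (take i es2))"
    and i: "i < length (es1 @ es2)"
  show "Jg ((es1 @ es2) ! i) (RL (take i (es1 @ es2))) (QL (take i (es1 @ es2)))"
  proof (cases "i < length es1")
    case True then show ?thesis using v1 by (simp add: nth_append)
  next
    case False
    have *: "set (take (i - length es1) es2) \<subseteq> set (es1 @ take (i - length es1) es2)" by auto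
    have J: "Jg (es2 ! (i - length es1)) (RL (take (i - length es1) es2)) (QL (take (i - length es1) es2))"
      using v2 i False by auto
    show ?thesis using False
      by (simp add: nth_append) (rule Jg_mono[OF J], erule RL_mono[OF *], erule QL_mono[OF *])
  qed
qed

lemma validL_snoc: "validL es \<Longrightarrow> Jg e (RL es) (QL es) \<Longrightarrow> validL (es @ [e])"
  unfolding validL_def by (auto simp: nth_append less_Suc_eq)

lemma validL_Nil[simp]: "validL []" by (simp add: validL_def)

lemma rcode_tag[simp]:
  "pd1 (rcode Zf) = 0" "pd1 (rcode Sf) = 1" "pd1 (rcode (Idf i)) = 2" "pd1 (rcode (Cnf f gs)) = 3"
  "pd1 (rcode (Prf f g)) = 4" "pd1 (rcode (Mnf f)) = 5"
  by simp_all

lemma Jg_Z: "ec e = rcode Zf \<Longrightarrow> Jg e R Q \<longleftrightarrow> ey e = 0"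
  unfolding Jg_def by simp
lemma Jg_S: "ec e = rcode Sf \<Longrightarrow> Jg e R Q \<longleftrightarrow> 0 < llen (ex e) \<and> ey e = Suc (lnth (ex e) 0)"
  unfolding Jg_def by simp
lemma Jg_Id: "ec e = rcode (Idf j) \<Longrightarrow> Jg e R Q \<longleftrightarrow> j < llen (ex e) \<and> ey e = lnth (ex e) j"
  unfolding Jg_def by simp
lemma Jg_Cn: "ec e = rcode (Cnf g gs) \<Longrightarrow> Jg e R Q \<longleftrightarrow>
   llen (ea e) = length gs \<and> (\<forall>l<length gs. R (rcode (gs ! l)) (ex e) (lnth (ea e) l)) \<and> R (rcode g) (ea e) (ey e)"
  unfolding Jg_def by simp
lemma Jg_Pr: "ec e = rcode (Prf g h) \<Longrightarrow> Jg e R Q \<longleftrightarrow> 0 < llen (ex e) \<and>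
       ((lnth (ex e) 0 = 0 \<and> R (rcode g) (ltl (ex e)) (ey e)) \<or>
        (0 < lnth (ex e) 0 \<and> R (rcode (Prf g h)) (lcons (lnth (ex e) 0 - 1) (ltl (ex e))) (ea e) \<and>
           R (rcode h) (lcons (lnth (ex e) 0 - 1) (lcons (ea e) (ltl (ex e)))) (ey e)))"
  unfolding Jg_def by simp
lemma Jg_Mn: "ec e = rcode (Mnf g) \<Longrightarrow> Jg e R Q \<longleftrightarrow> R (rcode g) (lcons (ey e) (ex e)) 0 \<and>
       (\<forall>m<ey e. Q (rcode g) (lcons m (ex e)))"
  unfolding Jg_def by simp

section \<open>Soundness\<close>

lemma sound_aux:
  assumes v: "validL es"
  shows "i < length es \<Longrightarrow> ec (es ! i) = rcode f \<Longrightarrow> reval f (list_decode (ex (es ! i))) (ey (es ! i))"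
proof (induction i arbitrary: f rule: less_induct)
  case (less i)
  have IH: "reval f' (list_decode x) y" if R: "RL (take i es) (rcode f') x y" for f' x y
  proof -
    obtain e where e: "e \<in> set (take i es)" "ec e = rcode f'" "ex e = x" "ey e = y"
      using R unfolding RL_def by auto
    then obtain i' where i': "i' < i" "i' < length es" "e = es ! i'"
      using less.prems by (auto simp: in_set_conv_nth)
    show ?thesis using less.IH[OF i'(1) i'(2)] e i' by auto
  qed
  have IHQ: "\<exists>y. reval f' (list_decode x) (Suc y)" if Q: "QL (take i es) (rcode f') x" for f' x
  proof -
    obtain e where e: "e \<in> set (take i es)" "ec e = rcode f'" "ex e = x" "0 < ey e"
      using Q unfolding QL_def by auto
    then obtain i' where i': "i' < i" "i' < length es" "e = es ! i'"
      using less.prems by (auto simp: in_set_conv_nth)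
    show ?thesis using less.IH[OF i'(1) i'(2)] e i' by (intro exI[of _ "ey e - 1"]) auto
  qed
  define e where "e = es ! i"
  have J: "Jg e (RL (take i es)) (QL (take i es))" using v less.prems unfolding validL_def e_def by auto
  have c: "ec e = rcode f" using less.prems e_def by simp
  define xs where "xs = list_decode (ex e)"
  have xe: "ex e = list_encode xs" by (simp add: xs_def)
  show ?case unfolding e_def[symmetric] xs_def[symmetric]
  proof (cases f)
    case Zf
    then show "reval f xs (ey e)" using J c Jg_Z by (auto intro: reval_Z)
  next
    case Sf
    then have "0 < length xs" "ey e = Suc (xs ! 0)" using J c xe Jg_S by auto
    then show "reval f xs (ey e)" using Sf by (cases xs) (auto intro: reval_S)
  next
    case (Idf j)
    then have "j < length xs" "ey e = xs ! j" using J c xe Jg_Id by auto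
    then show "reval f xs (ey e)" using Idf by (auto intro: reval_Id)
  next
    case (Cnf g gs)
    then have J3: "llen (ea e) = length gs"
      "\<forall>l<length gs. RL (take i es) (rcode (gs ! l)) (ex e) (lnth (ea e) l)"
      "RL (take i es) (rcode g) (ea e) (ey e)"
      using J c Jg_Cn by auto
    define ys where "ys = list_decode (ea e)"
    have "length ys = length gs" using J3 by (simp add: ys_def llen_correct)
    moreover have "reval (gs ! l) xs (ys ! l)" if "l < length gs" for l
      using IH[OF J3(2)[rule_format, OF that]] that J3(1) unfolding xs_def ys_def
      by (simp add: lnth_correct llen_correct)
    ultimately have "list_all2 (\<lambda>g y. reval g xs y) gs ys" by (simp add: list_all2_conv_all_nth)
    moreover have "reval g ys (ey e)" using IH[OF J3(3)] by (simp add: ys_def)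
    ultimately show "reval f xs (ey e)" using Cnf by (auto intro: reval_Cn)
  next
    case (Prf g h)
    then have J4: "0 < length xs"
       "(xs ! 0 = 0 \<and> RL (take i es) (rcode g) (ltl (ex e)) (ey e)) \<or>
        (0 < xs ! 0 \<and> RL (take i es) (rcode f) (lcons (xs ! 0 - 1) (ltl (ex e))) (ea e) \<and>
           RL (take i es) (rcode h) (lcons (xs ! 0 - 1) (lcons (ea e) (ltl (ex e)))) (ey e))"
      using J c xe Jg_Pr[of e g h] Prf by (auto simp: lnth_correct)
    then obtain x0 rest where xs: "xs = x0 # rest" by (cases xs) auto
    have tl: "list_decode (ltl (ex e)) = rest" by (simp add: ltl_dec xe xs)
    show "reval f xs (ey e)"
    proof (cases x0)
      case 0
      then have "reval g rest (ey e)" using J4 IH[of g "ltl (ex e)" "ey e"] tl xs by auto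
      then show ?thesis using Prf xs 0 by (auto intro: reval_Pr0)
    next
      case (Suc n)
      then have R1: "RL (take i es) (rcode f) (lcons n (ltl (ex e))) (ea e)"
        and R2: "RL (take i es) (rcode h) (lcons n (lcons (ea e) (ltl (ex e)))) (ey e)"
        using J4 xs by auto
      have "reval (Prf g h) (n # rest) (ea e)" using IH[OF R1] Prf tl by (simp add: lcons_dec)
      moreover have "reval h (n # ea e # rest) (ey e)" using IH[OF R2] tl by (simp add: lcons_dec)
      ultimately show ?thesis using Prf xs Suc by (auto intro: reval_PrS)
    qed
  next
    case (Mnf g)
    then have J5: "RL (take i es) (rcode g) (lcons (ey e) (ex e)) 0"
        "\<forall>m<ey e. QL (take i es) (rcode g) (lcons m (ex e))"
      using J c Jg_Mn by auto
    have "reval g (ey e # xs) 0" using IH[OF J5(1)] by (simp add: lcons_dec xs_def)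
    moreover have "\<forall>m<ey e. \<exists>y. reval g (m # xs) (Suc y)"
    proof (intro allI impI)
      fix m assume "m < ey e"
      then have "QL (take i es) (rcode g) (lcons m (ex e))" using J5(2) by auto
      from IHQ[OF this] show "\<exists>y. reval g (m # xs) (Suc y)" by (simp add: lcons_dec xs_def)
    qed
    ultimately show "reval f xs (ey e)" using Mnf by (auto intro: reval_Mn)
  qed
qed

lemma sound:
  assumes "valid t" "i < llen t" "ec (lnth t i) = rcode f"
  shows "reval f (list_decode (ex (lnth t i))) (ey (lnth t i))"
proof -
  have v: "validL (list_decode t)" using assms(1) valid_validL[of "list_decode t"] by simp
  have i: "i < length (list_decode t)" using assms(2) by (simp add: llen_correct)
  show ?thesis using sound_aux[OF v i] assms(3) i by (simp add: lnth_correct)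
qed

section \<open>Determinism\<close>

inductive_cases revalZ: "reval Zf xs y"
inductive_cases revalS: "reval Sf xs y"
inductive_cases revalId: "reval (Idf i) xs y"
inductive_cases revalCn: "reval (Cnf f gs) xs y"
inductive_cases revalPr: "reval (Prf f g) xs y"
inductive_cases revalMn: "reval (Mnf f) xs y"

lemma reval_det: "reval f xs y \<Longrightarrow> reval f xs y' \<Longrightarrow> y' = y"
proof (induction f xs y arbitrary: y' rule: reval.induct)
  case (reval_Z xs) then show ?case by (cases rule: revalZ) auto
next
  case (reval_S x xs) then show ?case by (cases rule: revalS) auto
next
  case (reval_Id i xs) then show ?case by (cases rule: revalId) auto
next
  case (reval_Cn xs gs ys f z)
  from reval_Cn.prems obtain ys' where ys': "list_all2 (\<lambda>g y. reval g xs y) gs ys'" "reval f ys' y'"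
    by (cases rule: revalCn) auto
  have L: "list_all2 (\<lambda>g y. reval g xs y \<and> (\<forall>y'. reval g xs y' \<longrightarrow> y' = y)) gs ys"
    using reval_Cn(1) by (simp add: list_all2_conv_all_nth)
  have "ys' = ys" using L ys'(1)
    by (auto simp: list_all2_conv_all_nth intro!: nth_equalityI)
  then show ?case using reval_Cn.IH(2) ys'(2) by blast
next
  case (reval_Pr0 f xs z g)
  from reval_Pr0.prems show ?case by (cases rule: revalPr) (use reval_Pr0.IH in auto)
next
  case (reval_PrS f g n xs y z)
  from reval_PrS.prems obtain y2 where "reval (Prf f g) (n # xs) y2" "reval g (n # y2 # xs) y'"
    by (cases rule: revalPr) auto
  then show ?case using reval_PrS.IH by auto
next
  case (reval_Mn f n xs)
  from reval_Mn.prems have p: "reval f (y' # xs) 0" "\<forall>m<y'. \<exists>y. reval f (m # xs) (Suc y)"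
    by (auto elim: revalMn)
  show ?case
  proof (rule ccontr)
    assume "y' \<noteq> n"
    then consider "y' < n" | "n < y'" by linarith
    then show False
    proof cases
      case 1
      then obtain y where "\<forall>w. reval f (y' # xs) w \<longrightarrow> w = Suc y"
        using reval_Mn.IH(2) by blast
      then show False using p(1) by blast
    next
      case 2
      then obtain y where "reval f (n # xs) (Suc y)" using p(2) by blast
      then show False using reval_Mn.IH(1) by blast
    qed
  qed
qed

declare list_encode.simps(2)[simp del]

lemma RL_snoc: "RL (es @ [mkent c x y a]) c x y"
  by (auto simp: RL_def)

lemma extend:
  assumes "validL es" "Jg (mkent c x y a) (RL es) (QL es)"
  shows "\<exists>es'. validL es' \<and> RL es' c x y"
  using validL_snoc[OF assms] RL_snoc by blast

lemma RL_app1: "RL es1 c x y \<Longrightarrow> RL (es1 @ es2) c x y" by (auto simp: RL_def)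
lemma RL_app2: "RL es2 c x y \<Longrightarrow> RL (es1 @ es2) c x y" by (auto simp: RL_def)
lemma QL_app1: "QL es1 c x \<Longrightarrow> QL (es1 @ es2) c x" by (auto simp: QL_def)
lemma QL_app2: "QL es2 c x \<Longrightarrow> QL (es1 @ es2) c x" by (auto simp: QL_def)

lemma combine_list:
  assumes "list_all2 (\<lambda>g y. \<exists>es. validL es \<and> RL es (rcode g) x y) gs ys"
  shows "\<exists>es. validL es \<and> (\<forall>l<length gs. RL es (rcode (gs ! l)) x (ys ! l))"
  using assms
proof (induction rule: list_all2_induct)
  case Nil then show ?case by (intro exI[of _ "[]"]) simp
next
  case (Cons g gs y ys)
  obtain es1 where e1: "validL es1" "RL es1 (rcode g) x y" using Cons.hyps by auto
  obtain es2 where e2: "validL es2" "\<forall>l<length gs. RL es2 (rcode (gs ! l)) x (ys ! l)" using Cons.IH by auto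
  show ?case
  proof (intro exI[of _ "es1 @ es2"] conjI allI impI)
    show "validL (es1 @ es2)" by (rule validL_append[OF e1(1) e2(1)])
    fix l assume l: "l < length (g # gs)"
    show "RL (es1 @ es2) (rcode ((g # gs) ! l)) x ((y # ys) ! l)"
    proof (cases l)
      case 0 then show ?thesis using e1 by (simp add: RL_app1)
    next
      case (Suc l') then show ?thesis using e2 l by (simp add: RL_app2)
    qed
  qed
qed

lemma combine_n:
  fixes n :: nat
  assumes "\<forall>m<n. \<exists>es. validL es \<and> QL es c (X m)"
  shows "\<exists>es. validL es \<and> (\<forall>m<n. QL es c (X m))"
  using assms
proof (induction n)
  case 0 then show ?case by (intro exI[of _ "[]"]) simp
next
  case (Suc n)
  obtain es1 where e1: "validL es1" "\<forall>m<n. QL es1 c (X m)" using Suc by auto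
  obtain es2 where e2: "validL es2" "QL es2 c (X n)" using Suc.prems by auto
  show ?case
    by (intro exI[of _ "es1 @ es2"] conjI validL_append e1(1) e2(1))
      (use e1(2) e2(2) in \<open>auto simp: less_Suc_eq intro: QL_app1 QL_app2\<close>)
qed

lemma complete: "reval f xs y \<Longrightarrow> \<exists>es. validL es \<and> RL es (rcode f) (list_encode xs) y"
proof (induction rule: reval.induct)
  case (reval_Z xs)
  show ?case by (rule extend[OF validL_Nil, where a=0]) (simp add: Jg_Z)
next
  case (reval_S x xs)
  show ?case by (rule extend[OF validL_Nil, where a=0]) (simp add: Jg_S del: list_encode.simps)
next
  case (reval_Id i xs)
  show ?case by (rule extend[OF validL_Nil, where a=0]) (use reval_Id in \<open>simp add: Jg_Id\<close>)
next
  case (reval_Cn xs gs ys f z)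
  have "list_all2 (\<lambda>g y. \<exists>es. validL es \<and> RL es (rcode g) (list_encode xs) y) gs ys"
    using reval_Cn(1) by (rule list_all2_mono) auto
  from combine_list[OF this] obtain es1 where
    e1: "validL es1" "\<forall>l<length gs. RL es1 (rcode (gs ! l)) (list_encode xs) (ys ! l)" by auto
  obtain es2 where e2: "validL es2" "RL es2 (rcode f) (list_encode ys) z" using reval_Cn by auto
  have len: "length ys = length gs" using reval_Cn(1) by (simp add: list_all2_lengthD)
  show ?case
  proof (rule extend[OF validL_append[OF e1(1) e2(1)], where a="list_encode ys"])
    show "Jg (mkent (rcode (Cnf f gs)) (list_encode xs) z (list_encode ys)) (RL (es1 @ es2)) (QL (es1 @ es2))"
      using e1(2) e2(2) len by (simp add: Jg_Cn RL_app1 RL_app2)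
  qed
next
  case (reval_Pr0 f xs z g)
  then obtain es where e: "validL es" "RL es (rcode f) (list_encode xs) z" by auto
  show ?case
    by (rule extend[OF e(1), where a=0]) (use e(2) in \<open>simp add: Jg_Pr\<close>)
next
  case (reval_PrS f g n xs y z)
  obtain es1 where e1: "validL es1" "RL es1 (rcode (Prf f g)) (list_encode (n # xs)) y" using reval_PrS by auto
  obtain es2 where e2: "validL es2" "RL es2 (rcode g) (list_encode (n # y # xs)) z" using reval_PrS by auto
  show ?case
  proof (rule extend[OF validL_append[OF e1(1) e2(1)], where a=y])
    show "Jg (mkent (rcode (Prf f g)) (list_encode (Suc n # xs)) z y) (RL (es1 @ es2)) (QL (es1 @ es2))"
      using RL_app1[OF e1(2)] RL_app2[OF e2(2)] by (simp add: Jg_Pr lcons_correct)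
  qed
next
  case (reval_Mn f n xs)
  obtain es1 where e1: "validL es1" "RL es1 (rcode f) (list_encode (n # xs)) 0" using reval_Mn by auto
  have "\<forall>m<n. \<exists>es. validL es \<and> QL es (rcode f) (list_encode (m # xs))"
    using reval_Mn(3) unfolding QL_def RL_def by fastforce
  from combine_n[OF this] obtain es2 where e2: "validL es2" "\<forall>m<n. QL es2 (rcode f) (list_encode (m # xs))"
    by auto
  show ?case
  proof (rule extend[OF validL_append[OF e1(1) e2(1)], where a=0])
    show "Jg (mkent (rcode (Mnf f)) (list_encode xs) n 0) (RL (es1 @ es2)) (QL (es1 @ es2))"
      using RL_app1[OF e1(2)] e2(2) by (simp add: Jg_Mn lcons_correct QL_app2)
  qed
qed

section \<open>Bounded simulation\<close>

definition HasOut :: "nat \<Rightarrow> nat \<Rightarrow> nat \<Rightarrow> bool" where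
  "HasOut t c x \<longleftrightarrow> valid t \<and> (\<exists>i<llen t. ec (lnth t i) = c \<and> ex (lnth t i) = x)"
definition halts :: "nat \<Rightarrow> nat \<Rightarrow> nat \<Rightarrow> bool" where
  "halts c x n \<longleftrightarrow> (\<exists>t<Suc n. HasOut t c x)"
definition tfind :: "nat \<Rightarrow> nat \<Rightarrow> nat \<Rightarrow> nat" where
  "tfind c x n = bmin (Suc n) (\<lambda>t. HasOut t c x)"
definition ifind :: "nat \<Rightarrow> nat \<Rightarrow> nat \<Rightarrow> nat" where
  "ifind t c x = bmin (llen t) (\<lambda>i. ec (lnth t i) = c \<and> ex (lnth t i) = x)"
definition outv :: "nat \<Rightarrow> nat \<Rightarrow> nat \<Rightarrow> nat" where
  "outv c x n = ey (lnth (tfind c x n) (ifind (tfind c x n) c x))"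

lemma rp_halts0: "rp 3 (\<lambda>xs. halts (xs ! 0) (xs ! 1) (xs ! 2))"
  unfolding halts_def HasOut_def by (intro rfI) simp_all
lemma rp_halts[rfI]: "rf k A \<Longrightarrow> rf k B \<Longrightarrow> rf k C \<Longrightarrow> rp k (\<lambda>xs. halts (A xs) (B xs) (C xs))"
  by (rule rp_lift3[OF rp_halts0])
lemma rf_tfind0: "rf 3 (\<lambda>xs. tfind (xs ! 0) (xs ! 1) (xs ! 2))"
  unfolding tfind_def HasOut_def by (intro rfI) simp_all
lemma rf_tfind[rfI]: "rf k A \<Longrightarrow> rf k B \<Longrightarrow> rf k C \<Longrightarrow> rf k (\<lambda>xs. tfind (A xs) (B xs) (C xs))"
  by (rule rf_lift3[OF rf_tfind0])
lemma rf_ifind0: "rf 3 (\<lambda>xs. ifind (xs ! 0) (xs ! 1) (xs ! 2))"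
  unfolding ifind_def by (intro rfI) simp_all
lemma rf_ifind[rfI]: "rf k A \<Longrightarrow> rf k B \<Longrightarrow> rf k C \<Longrightarrow> rf k (\<lambda>xs. ifind (A xs) (B xs) (C xs))"
  by (rule rf_lift3[OF rf_ifind0])
lemma rf_outv[rfI]: "rf k A \<Longrightarrow> rf k B \<Longrightarrow> rf k C \<Longrightarrow> rf k (\<lambda>xs. outv (A xs) (B xs) (C xs))"
  unfolding outv_def by (intro rfI)

lemma halts_mono: "halts c x n \<Longrightarrow> n \<le> n' \<Longrightarrow> halts c x n'"
proof -
  assume h: "halts c x n" "n \<le> n'"
  then obtain t where t: "t < Suc n" "HasOut t c x" unfolding halts_def by blast
  show ?thesis unfolding halts_def using t h(2) by (intro exI[of _ t]) auto
qed


lemma tfind_stable: "halts c x n \<Longrightarrow> n \<le> n' \<Longrightarrow> tfind c x n' = tfind c x n"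
proof -
  assume h: "halts c x n" "n \<le> n'"
  then have "halts c x n'" by (rule halts_mono)
  then show ?thesis using h(1) unfolding tfind_def bmin_def halts_def by simp
qed

lemma outv_stable: "halts c x n \<Longrightarrow> n \<le> n' \<Longrightarrow> outv c x n' = outv c x n"
proof -
  assume h: "halts c x n" "n \<le> n'"
  show ?thesis unfolding outv_def tfind_stable[OF h] ..
qed

lemma halts_complete: "reval f xs y \<Longrightarrow> \<exists>n. halts (rcode f) (list_encode xs) n"
proof -
  assume "reval f xs y"
  from complete[OF this] obtain es where e: "validL es" "RL es (rcode f) (list_encode xs) y" by auto
  then obtain i where i: "i < length es" "ec (es ! i) = rcode f" "ex (es ! i) = list_encode xs"
    unfolding RL_def by (auto simp: in_set_conv_nth)
  have "HasOut (list_encode es) (rcode f) (list_encode xs)"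
    unfolding HasOut_def valid_validL using e(1) i by auto
  then show ?thesis unfolding halts_def by auto
qed

lemma outv_correct:
  assumes h: "halts (rcode f) (list_encode xs) n" and r: "reval f xs y"
  shows "outv (rcode f) (list_encode xs) n = y"
proof -
  define T where "T = tfind (rcode f) (list_encode xs) n"
  have ex: "\<exists>t<Suc n. HasOut t (rcode f) (list_encode xs)" using h unfolding halts_def .
  have HT: "HasOut T (rcode f) (list_encode xs)"
    using bmin_prop[OF ex] unfolding T_def tfind_def by blast
  define I where "I = ifind T (rcode f) (list_encode xs)"
  have ex2: "\<exists>i<llen T. ec (lnth T i) = rcode f \<and> ex (lnth T i) = list_encode xs"
    using HT unfolding HasOut_def by blast
  have I: "I < llen T" "ec (lnth T I) = rcode f" "ex (lnth T I) = list_encode xs"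
    using bmin_prop[OF ex2] unfolding I_def ifind_def by blast+
  have "valid T" using HT unfolding HasOut_def by blast
  from sound[OF this I(1,2)] have "reval f xs (ey (lnth T I))" using I(3) by simp
  then have "ey (lnth T I) = y" using reval_det r by blast
  then show ?thesis unfolding outv_def T_def[symmetric] I_def[symmetric] .
qed

declare list_encode.simps(2)[simp del]

lemma rf_lift4: "rf 4 (\<lambda>xs. F (xs ! 0) (xs ! 1) (xs ! 2) (xs ! 3)) \<Longrightarrow> rf k A \<Longrightarrow> rf k B \<Longrightarrow> rf k C \<Longrightarrow> rf k D \<Longrightarrow>
  rf k (\<lambda>xs. F (A xs) (B xs) (C xs) (D xs))"
  using rf_comp[of 4 "\<lambda>xs. F (xs ! 0) (xs ! 1) (xs ! 2) (xs ! 3)" "[A, B, C, D]" k]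
  by (simp add: numeral_3_eq_3 numeral_Bit0)
lemma rf_lift5: "rf 5 (\<lambda>xs. F (xs ! 0) (xs ! 1) (xs ! 2) (xs ! 3) (xs ! 4)) \<Longrightarrow> rf k A \<Longrightarrow> rf k B \<Longrightarrow> rf k C \<Longrightarrow> rf k D \<Longrightarrow> rf k E \<Longrightarrow>
  rf k (\<lambda>xs. F (A xs) (B xs) (C xs) (D xs) (E xs))"
  using rf_comp[of 5 "\<lambda>xs. F (xs ! 0) (xs ! 1) (xs ! 2) (xs ! 3) (xs ! 4)" "[A, B, C, D, E]" k]
  by (simp add: numeral_3_eq_3 numeral_Bit0 numeral_Bit1)
lemma rp_lift4: "rp 4 (\<lambda>xs. P (xs ! 0) (xs ! 1) (xs ! 2) (xs ! 3)) \<Longrightarrow> rf k A \<Longrightarrow> rf k B \<Longrightarrow> rf k C \<Longrightarrow> rf k D \<Longrightarrow>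
  rp k (\<lambda>xs. P (A xs) (B xs) (C xs) (D xs))"
  unfolding rp_def by (rule rf_lift4[where F="\<lambda>a b c d. if P a b c d then 1 else 0"])

definition stl :: "nat \<Rightarrow> nat" where "stl c = (c - 1) div 2"
primrec sitl :: "nat \<Rightarrow> nat \<Rightarrow> nat" where
  "sitl c 0 = c" | "sitl c (Suc i) = stl (sitl c i)"
definition slen :: "nat \<Rightarrow> nat" where "slen c = (\<Sum>i<c. if sitl c i = 0 then 0 else 1)"
definition stake :: "nat \<Rightarrow> nat \<Rightarrow> nat" where "stake c j = c - 2 ^ j * sitl c j"
definition sbit :: "nat \<Rightarrow> nat \<Rightarrow> nat" where "sbit c j = (if even (sitl c j) then 1 else 0)"

lemma rf_stl[rfI]: "rf k A \<Longrightarrow> rf k (\<lambda>xs. stl (A xs))" unfolding stl_def by (intro rfI)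
lemma rf_sitl[rfI]: "rf k A \<Longrightarrow> rf k B \<Longrightarrow> rf k (\<lambda>xs. sitl (A xs) (B xs))"
proof -
  assume a: "rf k A" "rf k B"
  have "rf k (\<lambda>xs. rec_nat (A xs) (\<lambda>i acc. stl acc) (B xs))"
    by (rule rf_prim; intro rfI a) simp_all
  moreover have "rec_nat c (\<lambda>i acc. stl acc) n = sitl c n" for c n by (induction n) auto
  ultimately show ?thesis by simp
qed
lemma rf_slen[rfI]: "rf k A \<Longrightarrow> rf k (\<lambda>xs. slen (A xs))"
proof -
  assume a: "rf k A"
  show ?thesis unfolding slen_def by (intro rfI a rf_drop1[OF a]) simp_all
qed
lemma rf_stake[rfI]: "rf k A \<Longrightarrow> rf k B \<Longrightarrow> rf k (\<lambda>xs. stake (A xs) (B xs))"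
  unfolding stake_def by (intro rfI)
lemma rf_sbit[rfI]: "rf k A \<Longrightarrow> rf k B \<Longrightarrow> rf k (\<lambda>xs. sbit (A xs) (B xs))"
  unfolding sbit_def by (intro rfI)

lemma stl_enc[simp]: "stl (enc_str (b # s)) = enc_str s"
  by (simp add: stl_def)

lemma enc_str_0[simp]: "enc_str s = 0 \<longleftrightarrow> s = []"
  by (cases s) auto

lemma stl_0[simp]: "stl 0 = 0" by (simp add: stl_def)

lemma stl_enc_tl: "stl (enc_str s) = enc_str (tl s)"
  by (cases s) (auto simp: stl_def)

lemma sitl_enc: "sitl (enc_str s) i = enc_str (drop i s)"
  by (induction i) (simp_all add: stl_enc_tl drop_Suc tl_drop)

lemma length_le_enc_str: "length s \<le> enc_str s"
  by (induction s) auto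

lemma slen_enc[simp]: "slen (enc_str s) = length s"
proof -
  have L: "length s \<le> enc_str s" by (rule length_le_enc_str)
  have "(sitl (enc_str s) i = 0) = (\<not> i < length s)" for i
    by (simp add: sitl_enc not_less)
  then have "slen (enc_str s) = (\<Sum>i<enc_str s. if i < length s then 1 else (0::nat))"
    unfolding slen_def by (intro sum.cong) auto
  also have "\<dots> = card {i. i < enc_str s \<and> i < length s}"
    by (simp add: sum.If_cases Int_def)
  also have "{i. i < enc_str s \<and> i < length s} = {..<length s}" using L by auto
  finally show ?thesis by simp
qed

lemma enc_str_split: "enc_str s = enc_str (take j s) + 2 ^ j * enc_str (drop j s)"
proof (induction s arbitrary: j)
  case Nil then show ?case by simp
next
  case (Cons b s)
  show ?case
  proof (cases j)
    case 0 then show ?thesis by simp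
  next
    case (Suc j')
    then show ?thesis using Cons[of j'] by (simp add: algebra_simps)
  qed
qed

lemma stake_enc[simp]: "stake (enc_str s) j = enc_str (take j s)"
  unfolding stake_def sitl_enc using enc_str_split[of s j] by simp

lemma sbit_enc[simp]: "j < length s \<Longrightarrow> sbit (enc_str s) j = enc_bit (s ! j)"
  unfolding sbit_def sitl_enc enc_bit_def
  by (cases "drop j s") (auto simp: Cons_nth_drop_Suc[symmetric] dest!: arg_cong[of _ _ hd] simp: hd_drop_conv_nth)

definition fnum :: "nat \<Rightarrow> nat" where
  "fnum y = (if odd (pd1 y) \<or> pd2 y = 0 then 0 else pd1 y div 2)"
definition fden :: "nat \<Rightarrow> nat" where
  "fden y = (if odd (pd1 y) \<or> pd2 y = 0 then 1 else pd2 y)"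
definition fval :: "nat \<Rightarrow> real" where
  "fval y = real (fnum y) / real (fden y)"

lemma rf_fnum[rfI]: "rf k A \<Longrightarrow> rf k (\<lambda>xs. fnum (A xs))" unfolding fnum_def by (intro rfI)
lemma rf_fden[rfI]: "rf k A \<Longrightarrow> rf k (\<lambda>xs. fden (A xs))" unfolding fden_def by (intro rfI)

lemma fden_pos: "0 < fden y" by (simp add: fden_def)
lemma fval_nonneg: "0 \<le> fval y" by (simp add: fval_def)
lemma fval_0[simp]: "fval 0 = 0" by (simp add: fval_def fnum_def)

lemma fval_enc: "fval (enc_rat q) = max (real_of_rat q) 0"
proof -
  obtain p d where qd: "quotient_of q = (p, d)" by (cases "quotient_of q")
  have d: "0 < d" using quotient_of_denom_pos[OF qd] .
  have q: "real_of_rat q = of_int p / of_int d"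
    using quotient_of_div[OF qd] by (simp add: of_rat_divide)
  have e: "enc_rat q = pe (enc_int p) (nat d)" by (simp add: enc_rat_def qd pe_def)
  show ?thesis
  proof (cases "0 \<le> p")
    case True
    then have "fval (enc_rat q) = real (nat p) / real (nat d)"
      using d by (simp add: e fval_def fnum_def fden_def enc_int_def)
    also have "\<dots> = real_of_rat q" using True d q by simp
    finally show ?thesis using True d q by simp
  next
    case False
    then have "odd (enc_int p)" by (simp add: enc_int_def)
    then have "fval (enc_rat q) = 0" by (simp add: e fval_def fnum_def)
    moreover have "real_of_rat q < 0" using False d q by (simp add: divide_neg_pos)
    ultimately show ?thesis by simp
  qed
qed

lemma gcd_bmin: "0 < B \<Longrightarrow> gcd A B = B - bmin B (\<lambda>j. (B - j) dvd A \<and> (B - j) dvd B)"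
proof -
  assume B: "0 < B"
  define g where "g = gcd A B"
  have g1: "1 \<le> g" using B by (simp add: g_def Suc_le_eq)
  have gB: "g \<le> B" using B by (simp add: g_def dvd_imp_le)
  have "bmin B (\<lambda>j. (B - j) dvd A \<and> (B - j) dvd B) = B - g"
  proof (rule bmin_eq)
    show "B - g < B" using g1 B by simp
    show "(B - (B - g)) dvd A \<and> (B - (B - g)) dvd B" using gB by (simp add: g_def)
    fix j assume j: "j < B - g"
    show "\<not> ((B - j) dvd A \<and> (B - j) dvd B)"
    proof
      assume "(B - j) dvd A \<and> (B - j) dvd B"
      then have "(B - j) dvd g" by (simp add: g_def)
      then have "B - j \<le> g" using g1 by (intro dvd_imp_le) auto
      then show False using j by simp
    qed
  qed
  then show ?thesis using gB by (simp add: g_def)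
qed

lemma rf_gcd[rfI]: "rf k A \<Longrightarrow> rf k B \<Longrightarrow> rf k (\<lambda>xs. gcd (A xs) (B xs))"
proof -
  assume a: "rf k A" "rf k B"
  have "rf k (\<lambda>xs. if B xs = 0 then A xs else B xs - bmin (B xs) (\<lambda>j. (B xs - j) dvd A xs \<and> (B xs - j) dvd B xs))"
    by (intro rfI a rf_drop1[OF a(1)] rf_drop1[OF a(2)]) simp_all
  then show ?thesis by (rule rf_cong) (auto simp: gcd_bmin)
qed

lemma quotient_of_char:
  assumes "r = of_int p / of_int q" "0 < q" "coprime p q"
  shows "quotient_of r = (p, q)"
proof -
  have "r = Fract p q" using assms(1) by (simp add: Fract_of_int_quotient)
  then have "quotient_of r = Rat.normalize (p, q)" by (simp add: quotient_of_Fract)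
  also have "\<dots> = (p, q)" using assms(2,3) by (simp add: Rat.normalize_def)
  finally show ?thesis .
qed

definition encq :: "nat \<Rightarrow> nat \<Rightarrow> nat" where
  "encq N D = pe (2 * (N div gcd N D)) (D div gcd N D)"

lemma rf_encq[rfI]: "rf k A \<Longrightarrow> rf k B \<Longrightarrow> rf k (\<lambda>xs. encq (A xs) (B xs))"
  unfolding encq_def by (intro rfI)

lemma encq_correct: "0 < D \<Longrightarrow> encq N D = enc_rat (of_nat N / of_nat D)"
proof -
  assume D: "0 < D"
  define g where "g = gcd N D"
  have g: "0 < g" using D by (simp add: g_def)
  have cop: "coprime (int (N div g)) (int (D div g))"
    using div_gcd_coprime[of N D] D by (simp add: g_def coprime_int_iff)
  have Dg: "0 < D div g" using D g by (simp add: g_def dvd_imp_le div_greater_zero_iff)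
  have val: "(of_nat N / of_nat D :: rat) = of_int (int (N div g)) / of_int (int (D div g))"
  proof -
    have "N = (N div g) * g" "D = (D div g) * g" by (simp_all add: g_def)
    then show ?thesis using g by (metis (no_types, lifting) of_int_of_nat_eq of_nat_mult mult_divide_mult_cancel_right of_nat_0_less_iff not_less0 of_nat_eq_0_iff order_less_irrefl)
  qed
  have "quotient_of (of_nat N / of_nat D :: rat) = (int (N div g), int (D div g))"
    by (rule quotient_of_char[OF val]) (use Dg cop in auto)
  then show ?thesis by (simp add: enc_rat_def encq_def g_def pe_def enc_int_def)
qed

declare list_encode.simps(2)[simp del]

definition inp :: "nat \<Rightarrow> nat \<Rightarrow> nat \<Rightarrow> nat" where
  "inp sc x m = lcons sc (lcons x (lcons m 0))"
definition Yv :: "nat \<Rightarrow> nat \<Rightarrow> nat \<Rightarrow> nat \<Rightarrow> nat \<Rightarrow> nat" where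
  "Yv k sc x m n = outv k (inp sc x m) n"
definition Hv :: "nat \<Rightarrow> nat \<Rightarrow> nat \<Rightarrow> nat \<Rightarrow> bool" where
  "Hv k sc m n \<longleftrightarrow> halts k (inp sc 1 m) n \<and> halts k (inp sc 0 m) n"
definition fle :: "nat \<Rightarrow> nat \<Rightarrow> bool" where
  "fle y y' \<longleftrightarrow> fnum y * fden y' \<le> fnum y' * fden y"

lemma inp_enc: "inp sc x m = list_encode [sc, x, m]"
  by (simp add: inp_def lcons_correct[symmetric])

lemma rf_inp[rfI]: "rf k A \<Longrightarrow> rf k B \<Longrightarrow> rf k C \<Longrightarrow> rf k (\<lambda>xs. inp (A xs) (B xs) (C xs))"
  unfolding inp_def by (intro rfI)
lemma rf_Yv[rfI]: "rf k A \<Longrightarrow> rf k B \<Longrightarrow> rf k C \<Longrightarrow> rf k D \<Longrightarrow> rf k E \<Longrightarrow>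
  rf k (\<lambda>xs. Yv (A xs) (B xs) (C xs) (D xs) (E xs))"
  unfolding Yv_def by (intro rfI)
lemma rp_Hv[rfI]: "rf k A \<Longrightarrow> rf k B \<Longrightarrow> rf k C \<Longrightarrow> rf k D \<Longrightarrow>
  rp k (\<lambda>xs. Hv (A xs) (B xs) (C xs) (D xs))"
  unfolding Hv_def by (intro rfI)
lemma rp_fle[rfI]: "rf k A \<Longrightarrow> rf k B \<Longrightarrow> rp k (\<lambda>xs. fle (A xs) (B xs))"
  unfolding fle_def by (intro rfI)

lemma fle_iff: "fle y y' \<longleftrightarrow> fval y \<le> fval y'"
proof -
  have d: "0 < real (fden y)" "0 < real (fden y')" using fden_pos by auto
  have "fval y \<le> fval y' \<longleftrightarrow> real (fnum y) * real (fden y') \<le> real (fnum y') * real (fden y)"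
    unfolding fval_def using d by (simp add: divide_le_eq le_divide_eq field_simps)
  also have "\<dots> \<longleftrightarrow> fle y y'" unfolding fle_def by (simp flip: of_nat_mult)
  finally show ?thesis by simp
qed

locale lsp =
  fixes pa qa pb qb :: nat
begin

definition vld :: "nat \<Rightarrow> nat \<Rightarrow> bool" where
  "vld y1 y0 \<longleftrightarrow> pa * fnum y1 * fden y0 + (qa - pa) * fnum y0 * fden y1 \<le> qa * fden y1 * fden y0 \<and>
                 pb * fnum y1 * fden y0 + (qb - pb) * fnum y0 * fden y1 \<le> qb * fden y1 * fden y0"

definition Good :: "nat \<Rightarrow> nat \<Rightarrow> nat \<Rightarrow> nat \<Rightarrow> bool" where
  "Good k sc m n \<longleftrightarrow> (\<forall>m'<Suc m. Hv k sc m' n \<and> vld (Yv k sc 1 m' n) (Yv k sc 0 m' n) \<and>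
      (0 < m' \<longrightarrow> fle (Yv k sc 1 (m' - 1) n) (Yv k sc 1 m' n) \<and> fle (Yv k sc 0 (m' - 1) n) (Yv k sc 0 m' n)))"

definition Mc :: "nat \<Rightarrow> nat \<Rightarrow> nat \<Rightarrow> nat" where
  "Mc k sc n = (\<Sum>m<n. if Good k sc m n then 1 else 0)"

definition Dy :: "nat \<Rightarrow> nat \<Rightarrow> nat \<Rightarrow> nat \<Rightarrow> nat" where
  "Dy k sc x n = (if Mc k sc n = 0 then 0 else Yv k sc x (Mc k sc n - 1) n)"

definition PN :: "nat \<Rightarrow> nat \<Rightarrow> nat \<Rightarrow> nat" where
  "PN k sc n = (\<Prod>j<slen sc. fnum (Dy k (stake sc j) (sbit sc j) n))"
definition PD :: "nat \<Rightarrow> nat \<Rightarrow> nat \<Rightarrow> nat" where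
  "PD k sc n = (\<Prod>j<slen sc. fden (Dy k (stake sc j) (sbit sc j) n))"
definition TD :: "nat \<Rightarrow> nat \<Rightarrow> nat" where
  "TD sc n = (\<Prod>k<n. PD k sc n * 2 ^ Suc k)"
definition TN :: "nat \<Rightarrow> nat \<Rightarrow> nat" where
  "TN sc n = (\<Sum>k<n. PN k sc n * (TD sc n div (PD k sc n * 2 ^ Suc k)))"
definition OutT :: "nat \<Rightarrow> nat \<Rightarrow> nat" where
  "OutT sc n = encq (TN sc n) (TD sc n)"

lemma rp_vld[rfI]: "rf k A \<Longrightarrow> rf k B \<Longrightarrow> rp k (\<lambda>xs. vld (A xs) (B xs))"
  unfolding vld_def by (intro rfI)

lemma rp_Good0: "rp 4 (\<lambda>xs. Good (xs ! 0) (xs ! 1) (xs ! 2) (xs ! 3))"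
  unfolding Good_def by (intro rfI) simp_all
lemma rp_Good[rfI]: "rf k A \<Longrightarrow> rf k B \<Longrightarrow> rf k C \<Longrightarrow> rf k D \<Longrightarrow> rp k (\<lambda>xs. Good (A xs) (B xs) (C xs) (D xs))"
  by (rule rp_lift4[OF rp_Good0])

lemma rf_Mc0: "rf 3 (\<lambda>xs. Mc (xs ! 0) (xs ! 1) (xs ! 2))"
  unfolding Mc_def by (intro rfI) simp_all
lemma rf_Mc[rfI]: "rf k A \<Longrightarrow> rf k B \<Longrightarrow> rf k C \<Longrightarrow> rf k (\<lambda>xs. Mc (A xs) (B xs) (C xs))"
  by (rule rf_lift3[OF rf_Mc0])

lemma rf_Dy[rfI]: "rf k A \<Longrightarrow> rf k B \<Longrightarrow> rf k C \<Longrightarrow> rf k D \<Longrightarrow> rf k (\<lambda>xs. Dy (A xs) (B xs) (C xs) (D xs))"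
  unfolding Dy_def by (intro rfI)

lemma rf_PN0: "rf 3 (\<lambda>xs. PN (xs ! 0) (xs ! 1) (xs ! 2))"
  unfolding PN_def by (intro rfI) simp_all
lemma rf_PN[rfI]: "rf k A \<Longrightarrow> rf k B \<Longrightarrow> rf k C \<Longrightarrow> rf k (\<lambda>xs. PN (A xs) (B xs) (C xs))"
  by (rule rf_lift3[OF rf_PN0])
lemma rf_PD0: "rf 3 (\<lambda>xs. PD (xs ! 0) (xs ! 1) (xs ! 2))"
  unfolding PD_def by (intro rfI) simp_all
lemma rf_PD[rfI]: "rf k A \<Longrightarrow> rf k B \<Longrightarrow> rf k C \<Longrightarrow> rf k (\<lambda>xs. PD (A xs) (B xs) (C xs))"
  by (rule rf_lift3[OF rf_PD0])
lemma rf_TD0: "rf 2 (\<lambda>xs. TD (xs ! 0) (xs ! 1))"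
  unfolding TD_def by (intro rfI) simp_all
lemma rf_TD[rfI]: "rf k A \<Longrightarrow> rf k B \<Longrightarrow> rf k (\<lambda>xs. TD (A xs) (B xs))"
  by (rule rf_lift2[OF rf_TD0])
lemma rf_TN0: "rf 2 (\<lambda>xs. TN (xs ! 0) (xs ! 1))"
  unfolding TN_def by (intro rfI) simp_all
lemma rf_OutT: "rf 2 (\<lambda>xs. OutT (xs ! 0) (xs ! 1))"
  unfolding OutT_def by (intro rfI rf_lift2[OF rf_TN0]) simp_all

end

declare list_encode.simps(2)[simp del]

locale lsp2 = lsp +
  assumes qa_pos: "0 < qa" and qb_pos: "0 < qb" and pa_pos: "0 < pa" and pa_le: "pa \<le> qa"
    and pb_lt: "pb < qb" and ab_le: "real pa / real qa \<le> real pb / real qb"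
begin

definition al :: real where "al = real pa / real qa"
definition bl :: real where "bl = real pb / real qb"

lemma al_pos: "0 < al" using qa_pos pa_pos by (simp add: al_def)
lemma al_le1: "al \<le> 1" using qa_pos pa_le by (simp add: al_def)
lemma bl_lt1: "bl < 1" using qb_pos pb_lt by (simp add: bl_def)
lemma bl_nonneg: "0 \<le> bl" by (simp add: bl_def)
lemma al_le_bl: "al \<le> bl" using ab_le by (simp add: al_def bl_def)

lemma lin_iff:
  fixes p q :: nat and n1 d1 n0 d0 :: nat
  assumes q: "0 < q" and pq: "p \<le> q" and d: "0 < d1" "0 < d0"
  shows "p * n1 * d0 + (q - p) * n0 * d1 \<le> q * d1 * d0 \<longleftrightarrow>
         (real p / real q) * (real n1 / real d1) + (1 - real p / real q) * (real n0 / real d0) \<le> 1"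
proof -
  have qd: "0 < real q * real d1 * real d0" using q d by simp
  have "(real p / real q) * (real n1 / real d1) + (1 - real p / real q) * (real n0 / real d0) \<le> 1 \<longleftrightarrow>
        ((real p / real q) * (real n1 / real d1) + (1 - real p / real q) * (real n0 / real d0)) * (real q * real d1 * real d0)
          \<le> 1 * (real q * real d1 * real d0)"
    using qd by (simp only: mult_le_cancel_right_pos)
  also have "((real p / real q) * (real n1 / real d1) + (1 - real p / real q) * (real n0 / real d0)) * (real q * real d1 * real d0)
      = real p * real n1 * real d0 + (real q - real p) * real n0 * real d1"
    using q d by (simp add: field_simps)
  also have "real q - real p = real (q - p)" using pq by simp
  also have "real p * real n1 * real d0 + real (q - p) * real n0 * real d1 \<le> 1 * (real q * real d1 * real d0)
      \<longleftrightarrow> p * n1 * d0 + (q - p) * n0 * d1 \<le> q * d1 * d0"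
    by (simp flip: of_nat_mult of_nat_add)
  finally show ?thesis by simp
qed

lemma vld_iff: "vld y1 y0 \<longleftrightarrow> al * fval y1 + (1 - al) * fval y0 \<le> 1 \<and> bl * fval y1 + (1 - bl) * fval y0 \<le> 1"
  unfolding vld_def al_def bl_def fval_def
  using lin_iff[OF qa_pos pa_le fden_pos fden_pos] lin_iff[OF qb_pos less_imp_le[OF pb_lt] fden_pos fden_pos]
  by simp

lemma Good_down: "Good k sc m n \<Longrightarrow> m' \<le> m \<Longrightarrow> Good k sc m' n"
  unfolding Good_def by auto

lemma Good_Hv: "Good k sc m n \<Longrightarrow> m' \<le> m \<Longrightarrow> Hv k sc m' n"
  unfolding Good_def by auto

lemma Yv_stable: "Hv k sc m n \<Longrightarrow> x \<in> {0, 1} \<Longrightarrow> n \<le> n' \<Longrightarrow> Yv k sc x m n' = Yv k sc x m n"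
  unfolding Hv_def Yv_def using outv_stable by auto

lemma Hv_mono: "Hv k sc m n \<Longrightarrow> n \<le> n' \<Longrightarrow> Hv k sc m n'"
  unfolding Hv_def using halts_mono by blast

lemma Good_up: "Good k sc m n \<Longrightarrow> n \<le> n' \<Longrightarrow> Good k sc m n'"
proof -
  assume G: "Good k sc m n" and nn: "n \<le> n'"
  have st: "Yv k sc x m' n' = Yv k sc x m' n" if "m' \<le> m" "x \<in> {0,1}" for m' x
    using Yv_stable[OF Good_Hv[OF G that(1)] that(2) nn] .
  show ?thesis unfolding Good_def
  proof (intro allI impI)
    fix m' assume m': "m' < Suc m"
    have "Hv k sc m' n'" using Hv_mono[OF Good_Hv[OF G] nn] m' by simp
    moreover have "vld (Yv k sc 1 m' n') (Yv k sc 0 m' n')"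
      using G m' st[of m' 1] st[of m' 0] unfolding Good_def by auto
    moreover have "0 < m' \<longrightarrow> fle (Yv k sc 1 (m' - 1) n') (Yv k sc 1 m' n') \<and> fle (Yv k sc 0 (m' - 1) n') (Yv k sc 0 m' n')"
      using G m' st[of m' 1] st[of m' 0] st[of "m' - 1" 1] st[of "m' - 1" 0] unfolding Good_def by auto
    ultimately show "Hv k sc m' n' \<and> vld (Yv k sc 1 m' n') (Yv k sc 0 m' n') \<and>
      (0 < m' \<longrightarrow> fle (Yv k sc 1 (m' - 1) n') (Yv k sc 1 m' n') \<and> fle (Yv k sc 0 (m' - 1) n') (Yv k sc 0 m' n'))"
      by blast
  qed
qed

lemma Mc_card: "Mc k sc n = card {m. m < n \<and> Good k sc m n}"
proof -
  have "Mc k sc n = (\<Sum>m\<in>{..<n} \<inter> {m. Good k sc m n}. 1)"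
    unfolding Mc_def by (simp add: sum.If_cases)
  also have "\<dots> = card {m. m < n \<and> Good k sc m n}" by (simp add: Int_def)
  finally show ?thesis .
qed

lemma Good_iff_Mc: "m < n \<Longrightarrow> Good k sc m n \<longleftrightarrow> m < Mc k sc n"
proof -
  assume mn: "m < n"
  let ?S = "{m. m < n \<and> Good k sc m n}"
  have fin: "finite ?S" by simp
  show ?thesis
  proof
    assume G: "Good k sc m n"
    have "{..m} \<subseteq> ?S" using G mn Good_down by auto
    then have "card {..m} \<le> card ?S" using fin by (rule card_mono[rotated])
    then show "m < Mc k sc n" by (simp add: Mc_card)
  next
    assume m: "m < Mc k sc n"
    show "Good k sc m n"
    proof (rule ccontr)
      assume nG: "\<not> Good k sc m n"
      have "?S \<subseteq> {..<m}"
      proof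
        fix m'' assume "m'' \<in> ?S"
        then have "Good k sc m'' n" by simp
        then show "m'' \<in> {..<m}" using nG Good_down[of k sc m'' n m] by (cases "m \<le> m''") auto
      qed
      then have "card ?S \<le> m" by (metis card_lessThan card_mono finite_lessThan)
      then show False using m by (simp add: Mc_card)
    qed
  qed
qed

lemma Mc_le: "Mc k sc n \<le> n"
proof -
  have "card {m. m < n \<and> Good k sc m n} \<le> card {..<n}" by (intro card_mono) auto
  then show ?thesis by (simp add: Mc_card)
qed

lemma Mc_Good: "0 < Mc k sc n \<Longrightarrow> Good k sc (Mc k sc n - 1) n"
  using Good_iff_Mc[of "Mc k sc n - 1" n k sc] Mc_le[of k sc n] by simp

lemma Mc_mono: "n \<le> n' \<Longrightarrow> Mc k sc n \<le> Mc k sc n'"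
proof (cases "Mc k sc n = 0")
  case False
  assume nn: "n \<le> n'"
  have G: "Good k sc (Mc k sc n - 1) n'" using Good_up[OF Mc_Good nn] False by simp
  have "Mc k sc n - 1 < n'" using Mc_le[of k sc n] False nn by simp
  then have "Mc k sc n - 1 < Mc k sc n'" using Good_iff_Mc G by blast
  then show ?thesis by simp
qed simp

lemma Good_chain: "Good k sc M n \<Longrightarrow> x \<in> {0,1} \<Longrightarrow> m1 \<le> m2 \<Longrightarrow> m2 \<le> M \<Longrightarrow> fval (Yv k sc x m1 n) \<le> fval (Yv k sc x m2 n)"
proof (induction m2)
  case 0 then show ?case by simp
next
  case (Suc m2)
  show ?case
  proof (cases "m1 = Suc m2")
    case True then show ?thesis by simp
  next
    case False
    then have "fval (Yv k sc x m1 n) \<le> fval (Yv k sc x m2 n)" using Suc by simp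
    moreover have "fle (Yv k sc x m2 n) (Yv k sc x (Suc m2) n)"
      using Suc.prems unfolding Good_def by (auto dest!: spec[of _ "Suc m2"])
    ultimately show ?thesis using fle_iff by (meson order.trans)
  qed
qed

definition Dn :: "nat \<Rightarrow> nat \<Rightarrow> bool list \<Rightarrow> bool \<Rightarrow> real" where
  "Dn k n s x = fval (Dy k (enc_str s) (enc_bit x) n)"

lemma enc_bit_01: "enc_bit x \<in> {0, 1}" by (simp add: enc_bit_def)

lemma Dn_nonneg: "0 \<le> Dn k n s x"
  by (simp add: Dn_def fval_nonneg)

lemma Dn_mono: "n \<le> n' \<Longrightarrow> Dn k n s x \<le> Dn k n' s x"
proof -
  assume nn: "n \<le> n'"
  let ?sc = "enc_str s" and ?x = "enc_bit x"
  show ?thesis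
  proof (cases "Mc k ?sc n = 0")
    case True then show ?thesis by (simp add: Dn_def Dy_def fval_nonneg)
  next
    case False
    let ?M = "Mc k ?sc n" and ?M' = "Mc k ?sc n'"
    have MM: "?M \<le> ?M'" by (rule Mc_mono[OF nn])
    have G: "Good k ?sc (?M - 1) n" using Mc_Good False by simp
    have G': "Good k ?sc (?M' - 1) n'" using Mc_Good False MM by simp
    have "Dn k n s x = fval (Yv k ?sc ?x (?M - 1) n)" using False by (simp add: Dn_def Dy_def)
    also have "\<dots> = fval (Yv k ?sc ?x (?M - 1) n')"
      using Yv_stable[OF Good_Hv[OF G order.refl] enc_bit_01 nn] by simp
    also have "\<dots> \<le> fval (Yv k ?sc ?x (?M' - 1) n')"
      by (rule Good_chain[OF G' enc_bit_01]) (use MM in auto)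
    also have "\<dots> = Dn k n' s x" using False MM by (simp add: Dn_def Dy_def)
    finally show ?thesis .
  qed
qed

lemma Dn_valid: "al * Dn k n s True + (1 - al) * Dn k n s False \<le> 1 \<and> bl * Dn k n s True + (1 - bl) * Dn k n s False \<le> 1"
proof (cases "Mc k (enc_str s) n = 0")
  case True then show ?thesis by (simp add: Dn_def Dy_def)
next
  case False
  have "Good k (enc_str s) (Mc k (enc_str s) n - 1) n" using Mc_Good False by simp
  then have "vld (Yv k (enc_str s) 1 (Mc k (enc_str s) n - 1) n) (Yv k (enc_str s) 0 (Mc k (enc_str s) n - 1) n)"
    unfolding Good_def by auto
  then show ?thesis using False by (simp add: vld_iff Dn_def Dy_def enc_bit_def)
qed

definition Cb :: real where "Cb = max (1 / al) (1 / (1 - bl))"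

lemma Dn_bound: "Dn k n s x \<le> Cb"
proof -
  have v: "al * Dn k n s True + (1 - al) * Dn k n s False \<le> 1" "bl * Dn k n s True + (1 - bl) * Dn k n s False \<le> 1"
    using Dn_valid by auto
  have n: "0 \<le> Dn k n s True" "0 \<le> Dn k n s False" by (simp_all add: Dn_nonneg)
  have "al * Dn k n s True \<le> 1" using v(1) n al_le1 by (smt (verit) mult_nonneg_nonneg)
  then have t: "Dn k n s True \<le> 1 / al" using al_pos by (simp add: le_divide_eq mult.commute)
  have "(1 - bl) * Dn k n s False \<le> 1" using v(2) n bl_nonneg by (smt (verit) mult_nonneg_nonneg)
  then have f: "Dn k n s False \<le> 1 / (1 - bl)" using bl_lt1 by (simp add: le_divide_eq mult.commute)
  show ?thesis using t f by (cases x) (auto simp: Cb_def)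
qed

lemma Cb_pos: "0 < Cb" using al_pos by (simp add: Cb_def less_max_iff_disj)

end

context lsp2
begin

definition Dk :: "nat \<Rightarrow> bool list \<Rightarrow> bool \<Rightarrow> real" where
  "Dk k s x = (SUP n. Dn k n s x)"

lemma Dn_bdd: "bdd_above (range (\<lambda>n. Dn k n s x))"
  using Dn_bound by (intro bdd_aboveI2) auto

lemma Dn_incseq: "incseq (\<lambda>n. Dn k n s x)"
  using Dn_mono by (auto simp: incseq_def)

lemma Dn_tendsto: "(\<lambda>n. Dn k n s x) \<longlonglongrightarrow> Dk k s x"
  unfolding Dk_def by (rule LIMSEQ_incseq_SUP[OF Dn_bdd Dn_incseq])

lemma Dn_le_Dk: "Dn k n s x \<le> Dk k s x"
  unfolding Dk_def by (rule cSUP_upper[OF _ Dn_bdd]) simp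

lemma Dk_nonneg: "0 \<le> Dk k s x"
  using Dn_le_Dk[of k 0 s x] Dn_nonneg[of k 0 s x] by simp

lemma Dk_bound: "Dk k s x \<le> Cb"
  unfolding Dk_def by (rule cSUP_least) (auto simp: Dn_bound)

lemma affine_le:
  fixes p a b d1 d0 :: real
  assumes "a \<le> p" "p \<le> b" "a * d1 + (1 - a) * d0 \<le> 1" "b * d1 + (1 - b) * d0 \<le> 1"
  shows "p * d1 + (1 - p) * d0 \<le> 1"
proof (cases "d0 \<le> d1")
  case True
  have "p * d1 + (1 - p) * d0 = d0 + p * (d1 - d0)" by (simp add: algebra_simps)
  also have "\<dots> \<le> d0 + b * (d1 - d0)" using True assms(2) by (intro add_left_mono mult_right_mono) auto
  also have "\<dots> = b * d1 + (1 - b) * d0" by (simp add: algebra_simps)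
  finally show ?thesis using assms(4) by simp
next
  case False
  have "p * d1 + (1 - p) * d0 = d0 + p * (d1 - d0)" by (simp add: algebra_simps)
  also have "\<dots> \<le> d0 + a * (d1 - d0)" using False assms(1) by (intro add_left_mono mult_right_mono_neg) auto
  also have "\<dots> = a * d1 + (1 - a) * d0" by (simp add: algebra_simps)
  finally show ?thesis using assms(3) by simp
qed

lemma Dk_valid: "p \<in> {al..bl} \<Longrightarrow> p * Dk k s True + (1 - p) * Dk k s False \<le> 1"
proof -
  assume p: "p \<in> {al..bl}"
  have lim: "(\<lambda>n. p * Dn k n s True + (1 - p) * Dn k n s False) \<longlonglongrightarrow> p * Dk k s True + (1 - p) * Dk k s False"
    by (intro tendsto_intros Dn_tendsto)
  have le: "p * Dn k n s True + (1 - p) * Dn k n s False \<le> 1" for n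
    using affine_le[of al p bl] p Dn_valid by auto
  show ?thesis by (rule LIMSEQ_le_const2[OF lim]) (use le in auto)
qed

definition Pn :: "nat \<Rightarrow> nat \<Rightarrow> bool list \<Rightarrow> real" where
  "Pn k n s = (\<Prod>j<length s. Dn k n (take j s) (s ! j))"
definition Pk :: "nat \<Rightarrow> bool list \<Rightarrow> real" where
  "Pk k s = (\<Prod>j<length s. Dk k (take j s) (s ! j))"

lemma Pn_tendsto: "(\<lambda>n. Pn k n s) \<longlonglongrightarrow> Pk k s"
  unfolding Pn_def Pk_def by (intro tendsto_prod Dn_tendsto)

lemma Pn_nonneg: "0 \<le> Pn k n s"
  unfolding Pn_def by (intro prod_nonneg) (simp add: Dn_nonneg)
lemma Pk_nonneg: "0 \<le> Pk k s"
  unfolding Pk_def by (intro prod_nonneg) (simp add: Dk_nonneg)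
lemma Pn_le_Pk: "Pn k n s \<le> Pk k s"
  unfolding Pn_def Pk_def by (intro prod_mono) (simp add: Dn_nonneg Dn_le_Dk)
lemma Pn_mono: "n \<le> n' \<Longrightarrow> Pn k n s \<le> Pn k n' s"
  unfolding Pn_def by (intro prod_mono) (simp add: Dn_nonneg Dn_mono)
lemma Pk_bound: "Pk k s \<le> Cb ^ length s"
proof -
  have "Pk k s \<le> (\<Prod>j<length s. Cb)" unfolding Pk_def by (intro prod_mono) (simp add: Dk_nonneg Dk_bound)
  then show ?thesis by simp
qed

lemma Pk_snoc: "Pk k (s @ [x]) = Pk k s * Dk k s x"
proof -
  have "Pk k (s @ [x]) = (\<Prod>j<Suc (length s). Dk k (take j (s @ [x])) ((s @ [x]) ! j))"
    unfolding Pk_def by simp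
  also have "\<dots> = (\<Prod>j<length s. Dk k (take j (s @ [x])) ((s @ [x]) ! j)) * Dk k s x"
    by (simp add: prod.lessThan_Suc)
  also have "(\<Prod>j<length s. Dk k (take j (s @ [x])) ((s @ [x]) ! j)) = Pk k s"
    unfolding Pk_def by (intro prod.cong) (auto simp: nth_append)
  finally show ?thesis .
qed

lemma Pk_Nil[simp]: "Pk k [] = 1" by (simp add: Pk_def)

definition w :: "nat \<Rightarrow> real" where "w k = (1/2) ^ Suc k"

lemma w_pos: "0 < w k" by (simp add: w_def)
lemma w_sums: "w sums 1" unfolding w_def by (rule power_half_series)
lemma w_summable: "summable w" using w_sums by (rule sums_summable)

lemma term_summable: "summable (\<lambda>k. w k * Pk k s)"
proof (rule summable_comparison_test)
  have "norm (w n * Pk n s) \<le> Cb ^ length s * w n" for n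
  proof -
    have "norm (w n * Pk n s) = w n * Pk n s" using w_pos[of n] Pk_nonneg[of n s] by simp
    also have "\<dots> \<le> w n * Cb ^ length s" by (rule mult_left_mono[OF Pk_bound less_imp_le[OF w_pos]])
    finally show ?thesis by (simp add: mult.commute)
  qed
  then show "\<exists>N. \<forall>n\<ge>N. norm (w n * Pk n s) \<le> Cb ^ length s * w n" by blast
  show "summable (\<lambda>n. Cb ^ length s * w n)" by (intro summable_mult w_summable)
qed

definition Tm :: "bool list \<Rightarrow> real" where "Tm s = (\<Sum>k. w k * Pk k s)"

definition Rn :: "bool list \<Rightarrow> nat \<Rightarrow> real" where "Rn s n = (\<Sum>k<n. w k * Pn k n s)"

lemma Rn_mono: "n \<le> n' \<Longrightarrow> Rn s n \<le> Rn s n'"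
proof -
  assume nn: "n \<le> n'"
  have "Rn s n \<le> (\<Sum>k<n. w k * Pn k n' s)"
    unfolding Rn_def by (intro sum_mono mult_left_mono Pn_mono nn) (simp add: w_pos less_imp_le)
  also have "\<dots> \<le> (\<Sum>k<n'. w k * Pn k n' s)"
    by (intro sum_mono2) (use nn in \<open>auto intro!: mult_nonneg_nonneg less_imp_le[OF w_pos] Pn_nonneg\<close>)
  finally show ?thesis by (simp add: Rn_def)
qed

lemma Rn_le_Tm: "Rn s n \<le> Tm s"
proof -
  have "Rn s n \<le> (\<Sum>k<n. w k * Pk k s)"
    unfolding Rn_def by (intro sum_mono mult_left_mono Pn_le_Pk) (simp add: w_pos less_imp_le)
  also have "\<dots> \<le> Tm s" unfolding Tm_def
    by (intro sum_le_suminf term_summable) (auto intro!: mult_nonneg_nonneg less_imp_le[OF w_pos] Pk_nonneg)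
  finally show ?thesis .
qed

lemma Rn_tendsto: "(\<lambda>n. Rn s n) \<longlonglongrightarrow> Tm s"
proof -
  have bdd: "bdd_above (range (\<lambda>n. Rn s n))" using Rn_le_Tm by (intro bdd_aboveI2) auto
  have inc: "incseq (\<lambda>n. Rn s n)" using Rn_mono by (auto simp: incseq_def)
  have L: "(\<lambda>n. Rn s n) \<longlonglongrightarrow> (SUP n. Rn s n)" by (rule LIMSEQ_incseq_SUP[OF bdd inc])
  have le1: "(SUP n. Rn s n) \<le> Tm s" by (rule cSUP_least) (auto simp: Rn_le_Tm)
  have "(\<Sum>k<K. w k * Pk k s) \<le> (SUP n. Rn s n)" for K
  proof -
    have "(\<lambda>n. \<Sum>k<K. w k * Pn k n s) \<longlonglongrightarrow> (\<Sum>k<K. w k * Pk k s)"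
      by (intro tendsto_intros Pn_tendsto)
    moreover have "\<exists>N. \<forall>n\<ge>N. (\<Sum>k<K. w k * Pn k n s) \<le> (SUP n. Rn s n)"
    proof (intro exI[of _ K] allI impI)
      fix n assume n: "K \<le> n"
      have "(\<Sum>k<K. w k * Pn k n s) \<le> Rn s n" unfolding Rn_def
        by (intro sum_mono2) (use n in \<open>auto intro!: mult_nonneg_nonneg less_imp_le[OF w_pos] Pn_nonneg\<close>)
      also have "\<dots> \<le> (SUP n. Rn s n)" by (rule cSUP_upper[OF _ bdd]) simp
      finally show "(\<Sum>k<K. w k * Pn k n s) \<le> (SUP n. Rn s n)" .
    qed
    ultimately show ?thesis by (rule LIMSEQ_le_const2)
  qed
  then have le2: "Tm s \<le> (SUP n. Rn s n)" unfolding Tm_def by (intro suminf_le_const term_summable)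
  have eq: "(SUP n. Rn s n) = Tm s" using le1 le2 by (rule antisym)
  show ?thesis using L unfolding eq .
qed

lemma Tm_Nil: "Tm [] = 1"
  unfolding Tm_def using w_sums by (simp add: sums_iff)

lemma Tm_nonneg: "0 \<le> Tm s"
  unfolding Tm_def by (intro suminf_nonneg term_summable) (auto intro!: mult_nonneg_nonneg less_imp_le[OF w_pos] Pk_nonneg)

lemma Tm_step: "p \<in> {al..bl} \<Longrightarrow> p * (Tm (s @ [True]) - Tm s) + (1 - p) * (Tm (s @ [False]) - Tm s) \<le> 0"
proof -
  assume p: "p \<in> {al..bl}"
  have s1: "summable (\<lambda>k. w k * Pk k (s @ [True]))" "summable (\<lambda>k. w k * Pk k (s @ [False]))"
    "summable (\<lambda>k. w k * Pk k s)" by (rule term_summable)+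
  have "p * (Tm (s @ [True]) - Tm s) + (1 - p) * (Tm (s @ [False]) - Tm s)
      = (\<Sum>k. p * (w k * Pk k (s @ [True])) + (1 - p) * (w k * Pk k (s @ [False])) - w k * Pk k s)"
  proof -
    have A: "(\<Sum>k. p * (w k * Pk k (s @ [True])) + (1 - p) * (w k * Pk k (s @ [False])) - w k * Pk k s)
        = (\<Sum>k. p * (w k * Pk k (s @ [True])) + (1 - p) * (w k * Pk k (s @ [False]))) - (\<Sum>k. w k * Pk k s)"
      by (rule suminf_diff[symmetric]) (intro summable_add summable_mult s1, rule s1)
    have B: "(\<Sum>k. p * (w k * Pk k (s @ [True])) + (1 - p) * (w k * Pk k (s @ [False])))
        = (\<Sum>k. p * (w k * Pk k (s @ [True]))) + (\<Sum>k. (1 - p) * (w k * Pk k (s @ [False])))"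
      by (rule suminf_add[symmetric]) (intro summable_mult s1)+
    have C: "(\<Sum>k. p * (w k * Pk k (s @ [True]))) = p * Tm (s @ [True])"
      "(\<Sum>k. (1 - p) * (w k * Pk k (s @ [False]))) = (1 - p) * Tm (s @ [False])"
      unfolding Tm_def by (rule suminf_mult[OF s1(1)], rule suminf_mult[OF s1(2)])
    have "(\<Sum>k. p * (w k * Pk k (s @ [True])) + (1 - p) * (w k * Pk k (s @ [False])) - w k * Pk k s)
        = p * Tm (s @ [True]) + (1 - p) * Tm (s @ [False]) - Tm s"
      unfolding A B C by (simp add: Tm_def)
    then show ?thesis by (simp add: algebra_simps)
  qed
  also have "\<dots> \<le> 0"
  proof (rule suminf_le_const)
    show "summable (\<lambda>k. p * (w k * Pk k (s @ [True])) + (1 - p) * (w k * Pk k (s @ [False])) - w k * Pk k s)"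
      by (intro summable_diff summable_add summable_mult s1)
    fix n
    show "(\<Sum>k<n. p * (w k * Pk k (s @ [True])) + (1 - p) * (w k * Pk k (s @ [False])) - w k * Pk k s) \<le> 0"
    proof (rule sum_nonpos)
      fix k
      have "p * (w k * Pk k (s @ [True])) + (1 - p) * (w k * Pk k (s @ [False])) - w k * Pk k s
          = w k * Pk k s * (p * Dk k s True + (1 - p) * Dk k s False - 1)"
        by (simp add: Pk_snoc algebra_simps)
      also have "\<dots> \<le> 0"
        using Dk_valid[OF p, of k s] w_pos[of k] Pk_nonneg[of k s]
        by (intro mult_nonneg_nonpos) auto
      finally show "p * (w k * Pk k (s @ [True])) + (1 - p) * (w k * Pk k (s @ [False])) - w k * Pk k s \<le> 0" .
    qed
  qed
  finally show ?thesis .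
qed

lemma Tm_supermart: "test_supermartingale {al..bl} Tm"
  unfolding test_supermartingale_def
proof (intro conjI allI)
  show "Tm [] = 1" by (rule Tm_Nil)
  fix s
  show "0 \<le> Tm s" by (rule Tm_nonneg)
  show "upper_exp {al..bl} (\<lambda>x. Tm (s @ [x]) - Tm s) \<le> 0"
    unfolding upper_exp_def using al_le_bl Tm_step by (intro cSUP_least) auto
qed

end

declare list_encode.simps(2)[simp del]

lemma prefix_Suc: "prefix \<omega> (Suc n) = prefix \<omega> n @ [\<omega> n]"
  by (simp add: prefix_def)
lemma prefix_length[simp]: "length (prefix \<omega> n) = n"
  by (simp add: prefix_def)
lemma prefix_take: "j \<le> n \<Longrightarrow> take j (prefix \<omega> n) = prefix \<omega> j"
  by (simp add: prefix_def take_map)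
lemma prefix_nth: "j < n \<Longrightarrow> prefix \<omega> n ! j = \<omega> j"
  by (simp add: prefix_def)

lemma mult_gen_snoc: "mult_gen D (s @ [x]) = mult_gen D s * D s x"
proof -
  have "mult_gen D (s @ [x]) = (\<Prod>k<Suc (length s). D (take k (s @ [x])) ((s @ [x]) ! k))"
    unfolding mult_gen_def by simp
  also have "\<dots> = (\<Prod>k<length s. D (take k (s @ [x])) ((s @ [x]) ! k)) * D s x"
    by (simp add: prod.lessThan_Suc)
  also have "(\<Prod>k<length s. D (take k (s @ [x])) ((s @ [x]) ! k)) = mult_gen D s"
    unfolding mult_gen_def by (intro prod.cong) (auto simp: nth_append)
  finally show ?thesis .
qed

lemma upper_exp_ge:
  assumes p: "p \<in> {a..b}" and a: "0 \<le> a" and b: "b \<le> 1"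
  shows "p * f True + (1 - p) * f False \<le> upper_exp {a..b} f"
  unfolding upper_exp_def
proof (rule cSUP_upper[OF p])
  show "bdd_above ((\<lambda>p. p * f True + (1 - p) * f False) ` {a..b})"
  proof (rule bdd_aboveI2)
    fix q :: real assume q: "q \<in> {a..b}"
    then have q01: "0 \<le> q" "q \<le> 1" using a b by auto
    have "q * f True \<le> q * \<bar>f True\<bar>" using q01 by (intro mult_left_mono) auto
    also have "\<dots> \<le> \<bar>f True\<bar>" using q01 by (intro mult_left_le_one_le) auto
    finally have t: "q * f True \<le> \<bar>f True\<bar>" .
    have "(1 - q) * f False \<le> (1 - q) * \<bar>f False\<bar>" using q01 by (intro mult_left_mono) auto
    also have "\<dots> \<le> \<bar>f False\<bar>" using q01 by (intro mult_left_le_one_le) auto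
    finally have "(1 - q) * f False \<le> \<bar>f False\<bar>" .
    note t this
    then show "q * f True + (1 - q) * f False \<le> \<bar>f True\<bar> + \<bar>f False\<bar>" by simp
  qed
qed

context lsp2
begin

lemma Dk_eq:
  assumes rv: "\<forall>s x n. reval f [enc_str s, enc_bit x, n] (enc_rat (r s x n))"
    and mo: "\<forall>s x. mono (r s x)" and lim: "\<forall>s x. (\<lambda>n. real_of_rat (r s x n)) \<longlonglongrightarrow> D s x"
    and nn: "\<And>x. 0 \<le> D s x"
    and v: "al * D s True + (1 - al) * D s False \<le> 1" "bl * D s True + (1 - bl) * D s False \<le> 1"
  shows "Dk (rcode f) s x = D s x"
proof -
  define K where "K = rcode f"
  define sc where "sc = enc_str s"
  have inc: "incseq (\<lambda>n. real_of_rat (r s y n))" for y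
    using mo unfolding incseq_def mono_def by (auto simp: of_rat_less_eq)
  have rle: "real_of_rat (r s y m) \<le> D s y" for y m
    by (rule incseq_le[OF inc]) (use lim in auto)
  have rmono: "m \<le> m' \<Longrightarrow> real_of_rat (r s y m) \<le> real_of_rat (r s y m')" for y m m'
    using inc unfolding incseq_def by auto
  have cor: "Yv K sc (enc_bit y) m n = enc_rat (r s y m)" if "Hv K sc m n" for y m n
  proof -
    have "halts K (inp sc (enc_bit y) m) n" using that unfolding Hv_def by (cases y) (auto simp: enc_bit_def)
    then have "halts (rcode f) (list_encode [enc_str s, enc_bit y, m]) n" by (simp add: inp_enc K_def sc_def)
    from outv_correct[OF this rv[rule_format, of s y m]]
    show ?thesis by (simp add: Yv_def inp_enc K_def sc_def)
  qed
  have fvc: "fval (Yv K sc (enc_bit y) m n) = max (real_of_rat (r s y m)) 0" if "Hv K sc m n" for y m n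
    using cor[OF that] fval_enc by simp
  have up: "Dn K n s x \<le> D s x" for n
  proof (cases "Mc K sc n = 0")
    case True then show ?thesis using nn by (simp add: Dn_def Dy_def sc_def)
  next
    case False
    have H: "Hv K sc (Mc K sc n - 1) n" using Good_Hv[OF Mc_Good] False by auto
    have "Dn K n s x = max (real_of_rat (r s x (Mc K sc n - 1))) 0"
      using False fvc[OF H] by (simp add: Dn_def Dy_def sc_def)
    then show ?thesis using rle nn by simp
  qed
  have hv: "\<exists>N. \<forall>m'\<le>m. Hv K sc m' N" for m
  proof (induction m)
    case 0
    obtain n1 where n1: "halts K (inp sc 1 0) n1"
      using halts_complete[OF rv[rule_format, of s True 0]] by (auto simp: inp_enc K_def sc_def enc_bit_def)
    obtain n0 where n0: "halts K (inp sc 0 0) n0"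
      using halts_complete[OF rv[rule_format, of s False 0]] by (auto simp: inp_enc K_def sc_def enc_bit_def)
    have "Hv K sc 0 (max n1 n0)" unfolding Hv_def using halts_mono n1 n0 by auto
    then show ?case by auto
  next
    case (Suc m)
    then obtain N where N: "\<forall>m'\<le>m. Hv K sc m' N" by auto
    obtain n1 where n1: "halts K (inp sc 1 (Suc m)) n1"
      using halts_complete[OF rv[rule_format, of s True "Suc m"]] by (auto simp: inp_enc K_def sc_def enc_bit_def)
    obtain n0 where n0: "halts K (inp sc 0 (Suc m)) n0"
      using halts_complete[OF rv[rule_format, of s False "Suc m"]] by (auto simp: inp_enc K_def sc_def enc_bit_def)
    have "Hv K sc (Suc m) (max N (max n1 n0))" unfolding Hv_def using halts_mono n1 n0 by auto
    moreover have "\<forall>m'\<le>m. Hv K sc m' (max N (max n1 n0))" using N Hv_mono by auto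
    ultimately show ?case by (intro exI[of _ "max N (max n1 n0)"]) (auto simp: le_Suc_eq)
  qed
  have low: "\<exists>N. max (real_of_rat (r s x m)) 0 \<le> Dn K N s x" for m
  proof -
    obtain N0 where N0: "\<forall>m'\<le>m. Hv K sc m' N0" using hv by auto
    define N where "N = max N0 (Suc m)"
    have HN: "Hv K sc m' N" if "m' \<le> m" for m' using N0 that Hv_mono[of K sc m' N0 N] by (simp add: N_def)
    have G: "Good K sc m N" unfolding Good_def
    proof (intro allI impI)
      fix m' assume m': "m' < Suc m"
      then have H: "Hv K sc m' N" using HN by simp
      have e1: "fval (Yv K sc 1 m' N) = max (real_of_rat (r s True m')) 0"
        using fvc[OF H, of True] by (simp add: enc_bit_def)
      have e0: "fval (Yv K sc 0 m' N) = max (real_of_rat (r s False m')) 0"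
        using fvc[OF H, of False] by (simp add: enc_bit_def)
      have l1: "max (real_of_rat (r s True m')) 0 \<le> D s True" using rle nn by simp
      have l0: "max (real_of_rat (r s False m')) 0 \<le> D s False" using rle nn by simp
      have "al * max (real_of_rat (r s True m')) 0 + (1 - al) * max (real_of_rat (r s False m')) 0
          \<le> al * D s True + (1 - al) * D s False"
        using l1 l0 al_pos al_le1 by (intro add_mono mult_left_mono) auto
      moreover have "bl * max (real_of_rat (r s True m')) 0 + (1 - bl) * max (real_of_rat (r s False m')) 0
          \<le> bl * D s True + (1 - bl) * D s False"
        using l1 l0 bl_nonneg bl_lt1 by (intro add_mono mult_left_mono) auto
      ultimately have V: "vld (Yv K sc 1 m' N) (Yv K sc 0 m' N)"
        unfolding vld_iff e1 e0 using v by linarith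
      have F: "0 < m' \<longrightarrow> fle (Yv K sc 1 (m' - 1) N) (Yv K sc 1 m' N) \<and> fle (Yv K sc 0 (m' - 1) N) (Yv K sc 0 m' N)"
      proof
        assume "0 < m'"
        have H': "Hv K sc (m' - 1) N" using HN m' by simp
        show "fle (Yv K sc 1 (m' - 1) N) (Yv K sc 1 m' N) \<and> fle (Yv K sc 0 (m' - 1) N) (Yv K sc 0 m' N)"
        proof -
          have mm: "x \<le> y \<Longrightarrow> max x 0 \<le> max y (0::real)" for x y by (simp add: max.coboundedI1)
          have f1: "fval (Yv K sc 1 (m' - 1) N) = max (real_of_rat (r s True (m' - 1))) 0"
            using fvc[OF H', of True] by (simp add: enc_bit_def)
          have f0: "fval (Yv K sc 0 (m' - 1) N) = max (real_of_rat (r s False (m' - 1))) 0"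
            using fvc[OF H', of False] by (simp add: enc_bit_def)
          show ?thesis unfolding fle_iff f1 f0 e1 e0
            using mm[OF rmono[of "m' - 1" m' True]] mm[OF rmono[of "m' - 1" m' False]] by simp
        qed
      qed
      show "Hv K sc m' N \<and> vld (Yv K sc 1 m' N) (Yv K sc 0 m' N) \<and>
        (0 < m' \<longrightarrow> fle (Yv K sc 1 (m' - 1) N) (Yv K sc 1 m' N) \<and> fle (Yv K sc 0 (m' - 1) N) (Yv K sc 0 m' N))"
        using H V F by blast
    qed
    have mN: "m < N" by (simp add: N_def)
    have mM: "m < Mc K sc N" using Good_iff_Mc[OF mN] G by simp
    then have MG: "Hv K sc (Mc K sc N - 1) N" using Good_Hv[OF Mc_Good] by auto
    have "Dn K N s x = max (real_of_rat (r s x (Mc K sc N - 1))) 0"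
      using mM fvc[OF MG] by (simp add: Dn_def Dy_def sc_def)
    moreover have "real_of_rat (r s x m) \<le> real_of_rat (r s x (Mc K sc N - 1))"
      using mM by (intro rmono) auto
    ultimately have "max (real_of_rat (r s x m)) 0 \<le> Dn K N s x" by (simp add: max.coboundedI1)
    then show ?thesis by blast
  qed
  have le1: "Dk K s x \<le> D s x" unfolding Dk_def by (rule cSUP_least) (auto simp: up)
  have L: "(\<lambda>m. max (real_of_rat (r s x m)) 0) \<longlonglongrightarrow> max (D s x) 0"
    by (intro tendsto_intros) (use lim in auto)
  have "\<exists>N. \<forall>m\<ge>N. max (real_of_rat (r s x m)) 0 \<le> Dk K s x"
    using low Dn_le_Dk order.trans by blast
  from LIMSEQ_le_const2[OF L this] have le2: "D s x \<le> Dk K s x" using nn by simp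
  show ?thesis using le1 le2 K_def by simp
qed

end

declare list_encode.simps(2)[simp del]

context lsp2
begin

lemma PN_enc: "PN k (enc_str s) n = (\<Prod>j<length s. fnum (Dy k (enc_str (take j s)) (enc_bit (s ! j)) n))"
  unfolding PN_def by (intro prod.cong) auto
lemma PD_enc: "PD k (enc_str s) n = (\<Prod>j<length s. fden (Dy k (enc_str (take j s)) (enc_bit (s ! j)) n))"
  unfolding PD_def by (intro prod.cong) auto

lemma PD_pos: "0 < PD k sc n"
  unfolding PD_def by (intro prod_pos) (simp add: fden_pos)

lemma PN_PD: "real (PN k (enc_str s) n) / real (PD k (enc_str s) n) = Pn k n s"
proof -
  have "Pn k n s = (\<Prod>j<length s. real (fnum (Dy k (enc_str (take j s)) (enc_bit (s ! j)) n)) /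
                                    real (fden (Dy k (enc_str (take j s)) (enc_bit (s ! j)) n)))"
    unfolding Pn_def Dn_def fval_def ..
  also have "\<dots> = (\<Prod>j<length s. real (fnum (Dy k (enc_str (take j s)) (enc_bit (s ! j)) n))) /
                  (\<Prod>j<length s. real (fden (Dy k (enc_str (take j s)) (enc_bit (s ! j)) n)))"
    by (rule prod_dividef)
  also have "\<dots> = real (PN k (enc_str s) n) / real (PD k (enc_str s) n)"
    unfolding PN_enc PD_enc by simp
  finally show ?thesis by simp
qed

lemma TD_pos: "0 < TD sc n"
  unfolding TD_def by (intro prod_pos) (simp add: PD_pos)

lemma TN_TD: "real (TN (enc_str s) n) / real (TD (enc_str s) n) = Rn s n"
proof -
  let ?sc = "enc_str s"
  let ?X = "\<lambda>k. PD k ?sc n * 2 ^ Suc k"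
  have dv: "?X k dvd TD ?sc n" if "k < n" for k
    unfolding TD_def using that by (intro dvd_prodI) auto
  have Xpos: "0 < real (?X k)" for k using PD_pos[of k ?sc n] by simp
  have "real (TN ?sc n) / real (TD ?sc n) = (\<Sum>k<n. real (PN k ?sc n) * real (TD ?sc n div ?X k) / real (TD ?sc n))"
    unfolding TN_def by (simp add: sum_divide_distrib)
  also have "\<dots> = (\<Sum>k<n. w k * Pn k n s)"
  proof (intro sum.cong refl)
    fix k assume "k \<in> {..<n}"
    then have "real (TD ?sc n div ?X k) = real (TD ?sc n) / real (?X k)" using dv by (simp add: real_of_nat_div)
    then have "real (PN k ?sc n) * real (TD ?sc n div ?X k) / real (TD ?sc n) = real (PN k ?sc n) / real (?X k)"
      using TD_pos[of ?sc n] Xpos[of k] by (simp add: field_simps)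
    also have "\<dots> = (real (PN k ?sc n) / real (PD k ?sc n)) * (1 / 2) ^ Suc k"
      by (simp add: field_simps power_divide)
    also have "\<dots> = w k * Pn k n s" by (simp add: PN_PD w_def)
    finally show "real (PN k ?sc n) * real (TD ?sc n div ?X k) / real (TD ?sc n) = w k * Pn k n s" .
  qed
  finally show ?thesis by (simp add: Rn_def)
qed

lemma Tm_lsc: "lower_semicomputable Tm"
proof -
  define r where "r s n = (of_nat (TN (enc_str s) n) / of_nat (TD (enc_str s) n) :: rat)" for s n
  have rr: "real_of_rat (r s n) = Rn s n" for s n
    unfolding r_def by (simp add: of_rat_divide TN_TD)
  obtain f where f: "\<forall>xs. length xs = 2 \<longrightarrow> reval f xs (OutT (xs ! 0) (xs ! 1))"
    using rf_OutT unfolding rf_def by blast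
  have "reval f [enc_str s, n] (enc_rat (r s n))" for s n
  proof -
    have "reval f [enc_str s, n] (OutT (enc_str s) n)" using f[rule_format, of "[enc_str s, n]"] by simp
    moreover have "OutT (enc_str s) n = enc_rat (r s n)"
      unfolding OutT_def r_def by (rule encq_correct[OF TD_pos])
    ultimately show ?thesis by simp
  qed
  then have rec: "recursive_SN_Q r" unfolding recursive_SN_Q_def by blast
  have mo: "mono (r s)" for s
    unfolding mono_def using Rn_mono rr by (metis of_rat_less_eq)
  have "(\<lambda>n. real_of_rat (r s n)) \<longlonglongrightarrow> Tm s" for s
    unfolding rr by (rule Rn_tendsto)
  then show ?thesis unfolding lower_semicomputable_def using rec mo by blast
qed

lemma dominate:
  assumes nr: "\<not> wML_random {al..bl} \<omega>"
  shows "limsup (\<lambda>n. ereal (Tm (prefix \<omega> n))) = \<infinity>"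
proof -
  obtain D where lsm: "lower_semicomputable_mult D" and ts: "test_supermartingale {al..bl} (mult_gen D)"
    and ls: "limsup (\<lambda>n. ereal (mult_gen D (prefix \<omega> n))) = \<infinity>"
    using nr unfolding wML_random_def by blast
  obtain r where recr: "recursive_SXN_Q r" and mo: "\<forall>s x. mono (r s x)"
    and lim: "\<forall>s x. (\<lambda>n. real_of_rat (r s x n)) \<longlonglongrightarrow> D s x"
    using lsm unfolding lower_semicomputable_mult_def by blast
  obtain f where rv: "\<forall>s x n. reval f [enc_str s, enc_bit x, n] (enc_rat (r s x n))"
    using recr unfolding recursive_SXN_Q_def by blast
  define M where "M = mult_gen D"
  have Mnn: "0 \<le> M s" for s using ts unfolding test_supermartingale_def M_def by blast
  have Mue: "upper_exp {al..bl} (\<lambda>x. M (s @ [x]) - M s) \<le> 0" for s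
    using ts unfolding test_supermartingale_def M_def by blast
  have Msnoc: "M (s @ [x]) = M s * D s x" for s x unfolding M_def by (rule mult_gen_snoc)
  have posD: "0 \<le> D s x" if "0 < M s" for s x
    using Mnn[of "s @ [x]"] that by (simp add: Msnoc zero_le_mult_iff)
  have posV: "p * D s True + (1 - p) * D s False \<le> 1" if "0 < M s" "p \<in> {al..bl}" for s p
  proof -
    have "p * (M (s @ [True]) - M s) + (1 - p) * (M (s @ [False]) - M s) \<le> upper_exp {al..bl} (\<lambda>x. M (s @ [x]) - M s)"
      by (rule upper_exp_ge[OF that(2)]) (use al_pos bl_lt1 in auto)
    also have "\<dots> \<le> 0" by (rule Mue)
    finally have "M s * (p * D s True + (1 - p) * D s False - 1) \<le> 0" by (simp add: Msnoc algebra_simps)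
    then show ?thesis using that(1) by (simp add: mult_le_0_iff)
  qed
  have allpos: "0 < M (prefix \<omega> n)" for n
  proof (rule ccontr)
    assume "\<not> 0 < M (prefix \<omega> n)"
    then have z: "M (prefix \<omega> n) = 0" using Mnn[of "prefix \<omega> n"] by simp
    have "M (prefix \<omega> m) = 0" if "n \<le> m" for m
      using that
    proof (induction m rule: dec_induct)
      case base then show ?case by (rule z)
    next
      case (step m) then show ?case by (simp add: prefix_Suc Msnoc)
    qed
    then have "eventually (\<lambda>m. ereal (M (prefix \<omega> m)) \<le> 0) sequentially"
      unfolding eventually_sequentially by (intro exI[of _ n]) simp
    then have "limsup (\<lambda>m. ereal (M (prefix \<omega> m))) \<le> 0" by (rule Limsup_bounded)
    then show False using ls by (simp add: M_def)
  qed
  define K where "K = rcode f"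
  have DkD: "Dk K (prefix \<omega> j) x = D (prefix \<omega> j) x" for j x
    unfolding K_def
    by (rule Dk_eq[OF rv mo lim posD[OF allpos] posV[OF allpos] posV[OF allpos]]) (use al_le_bl in auto)
  have PkM: "Pk K (prefix \<omega> n) = M (prefix \<omega> n)" for n
  proof -
    have "Pk K (prefix \<omega> n) = (\<Prod>j<n. D (prefix \<omega> j) (\<omega> j))"
      unfolding Pk_def by (intro prod.cong) (auto simp: prefix_take prefix_nth DkD)
    also have "\<dots> = M (prefix \<omega> n)"
      unfolding M_def mult_gen_def by (intro prod.cong) (auto simp: prefix_take prefix_nth)
    finally show ?thesis .
  qed
  have le: "w K * M (prefix \<omega> n) \<le> Tm (prefix \<omega> n)" for n
  proof -
    have "(\<Sum>k\<in>{K}. w k * Pk k (prefix \<omega> n)) \<le> Tm (prefix \<omega> n)"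
      unfolding Tm_def by (rule sum_le_suminf[OF term_summable]) (auto intro!: mult_nonneg_nonneg less_imp_le[OF w_pos] Pk_nonneg)
    then show ?thesis by (simp add: PkM)
  qed
  have "limsup (\<lambda>n. ereal (w K) * ereal (M (prefix \<omega> n))) \<le> limsup (\<lambda>n. ereal (Tm (prefix \<omega> n)))"
    by (rule Limsup_mono) (use le in auto)
  moreover have "limsup (\<lambda>n. ereal (w K) * ereal (M (prefix \<omega> n))) = ereal (w K) * \<infinity>"
    using limsup_ereal_mult_left[of "w K" "\<lambda>n. ereal (M (prefix \<omega> n))"] w_pos[of K] ls
    by (simp add: M_def)
  moreover have "ereal (w K) * \<infinity> = \<infinity>" using w_pos[of K] by simp
  ultimately show ?thesis by simp
qed

lemma lsp2_main:
  "\<exists>T. lower_semicomputable T \<and> test_supermartingale {al..bl} T \<and>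
       (\<forall>\<omega>. \<not> wML_random {al..bl} \<omega> \<longrightarrow> limsup (\<lambda>n. ereal (T (prefix \<omega> n))) = \<infinity>)"
  using Tm_lsc Tm_supermart dominate by blast

end

theorem lemma6:
  fixes a b :: rat
  assumes "0 < a" and "a \<le> b" and "b < 1"
  shows "\<exists>T. lower_semicomputable T \<and>
             test_supermartingale {real_of_rat a .. real_of_rat b} T \<and>
             (\<forall>\<omega>. \<not> wML_random {real_of_rat a .. real_of_rat b} \<omega> \<longrightarrow>
                  limsup (\<lambda>n. ereal (T (prefix \<omega> n))) = \<infinity>)"
proof -
  obtain ia ja where qa: "quotient_of a = (ia, ja)" by (cases "quotient_of a")
  obtain ib jb where qb: "quotient_of b = (ib, jb)" by (cases "quotient_of b")
  have ja: "0 < ja" using quotient_of_denom_pos[OF qa] .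
  have jb: "0 < jb" using quotient_of_denom_pos[OF qb] .
  have ea: "a = of_int ia / of_int ja" using quotient_of_div[OF qa] .
  have eb: "b = of_int ib / of_int jb" using quotient_of_div[OF qb] .
  have ia: "0 < ia" using assms(1) ja unfolding ea by (simp add: zero_less_divide_iff)
  have b0: "0 < b" using assms(1,2) by simp
  have ib: "0 < ib" using b0 jb unfolding eb by (simp add: zero_less_divide_iff)
  have a1: "a < 1" using assms(2,3) by simp
  have iaja: "ia \<le> ja" using a1 ja unfolding ea by (simp add: divide_less_eq)
  have ibjb: "ib < jb" using assms(3) jb unfolding eb by (simp add: divide_less_eq)
  have ra: "real_of_rat a = real (nat ia) / real (nat ja)"
    using ia ja unfolding ea by (simp add: of_rat_divide)
  have rb: "real_of_rat b = real (nat ib) / real (nat jb)"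
    using ib jb unfolding eb by (simp add: of_rat_divide)
  interpret L: lsp2 "nat ia" "nat ja" "nat ib" "nat jb"
  proof
    show "0 < nat ja" "0 < nat jb" "0 < nat ia" "nat ia \<le> nat ja" "nat ib < nat jb"
      using ja jb ia iaja ibjb by auto
    show "real (nat ia) / real (nat ja) \<le> real (nat ib) / real (nat jb)"
      using assms(2) ra rb of_rat_less_eq by metis
  qed
  have I: "{real_of_rat a .. real_of_rat b} = {L.al .. L.bl}"
    by (simp add: L.al_def L.bl_def ra rb)
  show ?thesis unfolding I by (rule L.lsp2_main)
qed

end
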